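(* Let $l_0,l_1,l_2$ be pairwise coprime with $1\le l_0\le l_1\le l_2$, $\mathbb{P}=\mathbb{P}(l_0,l_1,l_2)$, $p_0=[1:0:0]$, $p_1=[0:1:0]$, $p_2=[0:0:1]$. For all $d\ge l_2l_1+l_2l_0+l_2$, all $n\in\mathbb{N}$ and every $i\in\{0,1,2\}$, $\mathcal{C}^{p_i}_n(d)\neq\mathsf{Fol}(d)$. Furthermore, if $l_0=l_1=1$ and $l_2\ge2$, then $\mathcal{C}^{p_2}_n(d)\ne\mathsf{Fol}(d)$ for all $d\ge 2l_2+1$ and all $n\in\mathbb{N}$.
   Context: $\mathbb{P}(l_0,l_1,l_2)$ is the quotient of $\mathbb{C}^3\setminus\{0\}$ by $t\cdot(x_0,x_1,x_2)=(t^{l_0}x_0,t^{l_1}x_1,t^{l_2}x_2)$. $\mathsf{Fol}(d)$ is the projectivization of the space of 1-forms $\omega=\sum A_idx_i$ with $A_i$ quasi-homogeneous of degree $d-l_i$ and $\sum l_ix_iA_i=0$. An algebraic curve of degree $n$ is the zero set of a nonconstant quasi-homogeneous polynomial $F$ of degree $n$; it is $[\omega]$-invariant if $\omega\wedge dF=F\Theta$ for some polynomial 2-form $\Theta$. $\mathcal{C}^{p_i}_n(d)$ is the set of $\mathcal{F}\in\mathsf{Fol}(d)$ such that $p_i$ lies on some $\mathcal{F}$-invariant algebraic curve of degree $n$. *)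

theory Defs
  imports Complex_Main "HOL-Library.Product_Plus" "HOL-Library.Poly_Mapping"
begin

text \<open>Polynomials in C[x0,x1,x2]: finitely supported maps from exponent triples
 (a,b,c) (monomial x0^a x1^b x2^c) to coefficients; multiplication is the
 convolution product of Poly_Mapping.\<close>

type_synonym mono = "nat \<times> nat \<times> nat"
type_synonym cpoly = "mono \<Rightarrow>\<^sub>0 complex"
type_synonym form1 = "cpoly \<times> cpoly \<times> cpoly"

definition expo :: "nat \<Rightarrow> mono \<Rightarrow> nat" where
  "expo i m = (if i = 0 then fst m else if i = 1 then fst (snd m) else snd (snd m))"

definition unitv :: "nat \<Rightarrow> mono" where
  "unitv i = (if i = 0 then (1,0,0) else if i = 1 then (0,1,0) else (0,0,1))"

definition wdeg :: "nat \<times> nat \<times> nat \<Rightarrow> mono \<Rightarrow> nat" where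
  "wdeg l m = expo 0 l * expo 0 m + expo 1 l * expo 1 m + expo 2 l * expo 2 m"

text \<open>F is quasi-homogeneous of (integer) degree k (the zero polynomial counts for every k)\<close>
definition qhom :: "nat \<times> nat \<times> nat \<Rightarrow> int \<Rightarrow> cpoly \<Rightarrow> bool" where
  "qhom l k F \<longleftrightarrow> (\<forall>m\<in>Poly_Mapping.keys F. int (wdeg l m) = k)"

definition cst :: "complex \<Rightarrow> cpoly" where
  "cst c = Poly_Mapping.single 0 c"

definition var :: "nat \<Rightarrow> cpoly" where
  "var i = Poly_Mapping.single (unitv i) 1"

definition pd :: "nat \<Rightarrow> cpoly \<Rightarrow> cpoly" where
  "pd i F = (\<Sum>m\<in>Poly_Mapping.keys F. Poly_Mapping.single (m - unitv i) (of_nat (expo i m) * Poly_Mapping.lookup F m))"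

definition evalp :: "cpoly \<Rightarrow> complex \<times> complex \<times> complex \<Rightarrow> complex" where
  "evalp F z = (\<Sum>m\<in>Poly_Mapping.keys F. Poly_Mapping.lookup F m * fst z ^ expo 0 m * fst (snd z) ^ expo 1 m
                                  * snd (snd z) ^ expo 2 m)"

text \<open>component A_i of omega = A0 dx0 + A1 dx1 + A2 dx2\<close>
definition comp :: "nat \<Rightarrow> form1 \<Rightarrow> cpoly" where
  "comp i \<omega> = (if i = 0 then fst \<omega> else if i = 1 then fst (snd \<omega>) else snd (snd \<omega>))"

definition fol_form :: "nat \<times> nat \<times> nat \<Rightarrow> nat \<Rightarrow> form1 \<Rightarrow> bool" where
  "fol_form l d \<omega> \<longleftrightarrow>
     \<omega> \<noteq> (0,0,0) \<and>
     (\<forall>i\<le>2. qhom l (int d - int (expo i l)) (comp i \<omega>)) \<and>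
     (\<Sum>i\<le>2. cst (of_nat (expo i l)) * var i * comp i \<omega>) = 0"

definition scale_form :: "complex \<Rightarrow> form1 \<Rightarrow> form1" where
  "scale_form c \<omega> = (cst c * fst \<omega>, cst c * fst (snd \<omega>), cst c * snd (snd \<omega>))"

text \<open>Fol(d): the projectivization, i.e. the set of C^*-classes of admissible nonzero forms\<close>
definition Fol :: "nat \<times> nat \<times> nat \<Rightarrow> nat \<Rightarrow> form1 set set" where
  "Fol l d = {{scale_form c \<omega> | c. c \<noteq> 0} | \<omega>. fol_form l d \<omega>}"

definition curve_poly :: "nat \<times> nat \<times> nat \<Rightarrow> nat \<Rightarrow> cpoly \<Rightarrow> bool" where
  "curve_poly l n F \<longleftrightarrow> qhom l (int n) F \<and> (\<exists>m\<in>Poly_Mapping.keys F. m \<noteq> 0)"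

text \<open>omega wedge dF = F Theta for a polynomial 2-form Theta; the coefficient of
 dx_i wedge dx_j (i<j) in omega wedge dF is A_i dF/dx_j - A_j dF/dx_i.\<close>
definition invariant :: "form1 \<Rightarrow> cpoly \<Rightarrow> bool" where
  "invariant \<omega> F \<longleftrightarrow> (\<exists>\<Theta> :: nat \<Rightarrow> nat \<Rightarrow> cpoly.
     \<forall>i j. i < j \<and> j \<le> 2 \<longrightarrow>
       comp i \<omega> * pd j F - comp j \<omega> * pd i F = F * \<Theta> i j)"

definition pt :: "nat \<Rightarrow> complex \<times> complex \<times> complex" where
  "pt i = (if i = 0 then (1,0,0) else if i = 1 then (0,1,0) else (0,0,1))"

definition Cpt :: "nat \<times> nat \<times> nat \<Rightarrow> nat \<Rightarrow> nat \<Rightarrow> nat \<Rightarrow> form1 set set" where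
  "Cpt l i n d = {L \<in> Fol l d. \<exists>\<omega>\<in>L. \<exists>F. curve_poly l n F \<and> invariant \<omega> F \<and> evalp F (pt i) = 0}"

end

theory Submission
  imports Defs
begin
lemma expo_add[simp]: "expo t (a + b) = expo t a + expo t b"
  by (simp add: expo_def plus_prod_def)
lemma expo_diff[simp]: "expo t (a - b) = expo t a - expo t b"
  by (simp add: expo_def minus_prod_def)
lemma expo_zero[simp]: "expo t 0 = 0"
  by (simp add: expo_def zero_prod_def)
lemma mono_eqI: "(\<And>t. t \<le> 2 \<Longrightarrow> expo t a = expo t b) \<Longrightarrow> a = (b::mono)"
proof -
  assume h: "\<And>t. t \<le> 2 \<Longrightarrow> expo t a = expo t b"
  from h[of 0] h[of 1] h[of 2] show ?thesis
    by (cases a; cases b) (auto simp: expo_def)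
qed
lemma expo_unitv[simp]: "t \<le> 2 \<Longrightarrow> s \<le> 2 \<Longrightarrow> expo t (unitv s) = (if t = s then 1 else 0)"
  by (auto simp: expo_def unitv_def)
definition mk :: "(nat \<Rightarrow> nat) \<Rightarrow> mono" where "mk g = (g 0, g 1, g 2)"
lemma expo_mk[simp]: "t \<le> 2 \<Longrightarrow> expo t (mk g) = g t"
  by (auto simp: expo_def mk_def le_Suc_eq numeral_2_eq_2)

lemma lookup_sum_single:
  "Poly_Mapping.lookup (\<Sum>a\<in>A. Poly_Mapping.single (h a) (v a)) x = (\<Sum>a\<in>A. if h a = x then v a else 0)"
  by (simp add: lookup_sum lookup_single when_def)

lemma poly_sum_single_sup:
  fixes P :: cpoly
  assumes "finite A" "Poly_Mapping.keys P \<subseteq> A"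
  shows "P = (\<Sum>a\<in>A. Poly_Mapping.single a (Poly_Mapping.lookup P a))"
proof (rule poly_mapping_eqI)
  fix x
  have "Poly_Mapping.lookup (\<Sum>a\<in>A. Poly_Mapping.single a (Poly_Mapping.lookup P a)) x = (\<Sum>a\<in>A. if a = x then Poly_Mapping.lookup P a else 0)"
    by (simp add: lookup_sum lookup_single when_def)
  also have "\<dots> = Poly_Mapping.lookup P x"
    using assms by (auto simp: sum.delta' in_keys_iff)
  finally show "Poly_Mapping.lookup P x = Poly_Mapping.lookup (\<Sum>a\<in>A. Poly_Mapping.single a (Poly_Mapping.lookup P a)) x" by simp
qed

lemma lookup_mult_fin:
  fixes P Q :: cpoly
  assumes "finite A" "Poly_Mapping.keys P \<subseteq> A" "finite B" "Poly_Mapping.keys Q \<subseteq> B"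
  shows "Poly_Mapping.lookup (P * Q) x = (\<Sum>a\<in>A. \<Sum>b\<in>B. if a + b = x then Poly_Mapping.lookup P a * Poly_Mapping.lookup Q b else 0)"
proof -
  have "P * Q = (\<Sum>a\<in>A. Poly_Mapping.single a (Poly_Mapping.lookup P a)) * (\<Sum>b\<in>B. Poly_Mapping.single b (Poly_Mapping.lookup Q b))"
    using poly_sum_single_sup[OF assms(1,2)] poly_sum_single_sup[OF assms(3,4)] by simp
  also have "\<dots> = (\<Sum>a\<in>A. \<Sum>b\<in>B. Poly_Mapping.single (a + b) (Poly_Mapping.lookup P a * Poly_Mapping.lookup Q b))"
    by (simp add: sum_distrib_left sum_distrib_right mult_single sum.swap[of _ B])
  finally show ?thesis
    by (simp add: lookup_sum lookup_single when_def)
qed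

lemma top_key:
  fixes f :: "mono \<Rightarrow> int" and P Q :: cpoly
  assumes add: "\<And>a b. f (a + b) = f a + f b"
    and a0: "a0 \<in> Poly_Mapping.keys P" "\<And>a. a \<in> Poly_Mapping.keys P \<Longrightarrow> a \<noteq> a0 \<Longrightarrow> f a < f a0"
    and b0: "b0 \<in> Poly_Mapping.keys Q" "\<And>b. b \<in> Poly_Mapping.keys Q \<Longrightarrow> b \<noteq> b0 \<Longrightarrow> f b < f b0"
  shows "Poly_Mapping.lookup (P * Q) (a0 + b0) = Poly_Mapping.lookup P a0 * Poly_Mapping.lookup Q b0"
proof -
  have "Poly_Mapping.lookup (P * Q) (a0 + b0) = (\<Sum>a\<in>Poly_Mapping.keys P. \<Sum>b\<in>Poly_Mapping.keys Q. if a + b = a0 + b0 then Poly_Mapping.lookup P a * Poly_Mapping.lookup Q b else 0)"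
    by (rule lookup_mult_fin) auto
  also have "\<dots> = (\<Sum>a\<in>Poly_Mapping.keys P. \<Sum>b\<in>Poly_Mapping.keys Q. if a = a0 \<and> b = b0 then Poly_Mapping.lookup P a * Poly_Mapping.lookup Q b else 0)"
  proof (intro sum.cong refl)
    fix a b assume a: "a \<in> Poly_Mapping.keys P" and b: "b \<in> Poly_Mapping.keys Q"
    have "a + b = a0 + b0 \<longleftrightarrow> a = a0 \<and> b = b0"
    proof
      assume h: "a + b = a0 + b0"
      hence "f a + f b = f a0 + f b0" by (metis add)
      hence "a = a0" "b = b0" using a0(2)[OF a] b0(2)[OF b]
        by (smt (verit))+
      thus "a = a0 \<and> b = b0" by simp
    qed simp
    thus "(if a + b = a0 + b0 then Poly_Mapping.lookup P a * Poly_Mapping.lookup Q b else 0) =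
          (if a = a0 \<and> b = b0 then Poly_Mapping.lookup P a * Poly_Mapping.lookup Q b else 0)" by simp
  qed
  also have "\<dots> = Poly_Mapping.lookup P a0 * Poly_Mapping.lookup Q b0"
    proof -
    have "(\<Sum>a\<in>Poly_Mapping.keys P. \<Sum>b\<in>Poly_Mapping.keys Q. if a = a0 \<and> b = b0 then Poly_Mapping.lookup P a * Poly_Mapping.lookup Q b else 0)
       = (\<Sum>a\<in>Poly_Mapping.keys P. if a = a0 then (\<Sum>b\<in>Poly_Mapping.keys Q. if b = b0 then Poly_Mapping.lookup P a * Poly_Mapping.lookup Q b else 0) else 0)"
      by (intro sum.cong) auto
    also have "\<dots> = Poly_Mapping.lookup P a0 * Poly_Mapping.lookup Q b0"
      using a0(1) b0(1) by (simp add: sum.delta')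
    finally show ?thesis .
  qed
  finally show ?thesis .
qed

definition dg :: "nat \<Rightarrow> mono \<Rightarrow> nat" where
  "dg B a = expo 0 a + B * expo 1 a + B * B * expo 2 a"

lemma dg_add: "dg B (a + b) = dg B a + dg B b"
  by (simp add: dg_def algebra_simps)

lemma dg_bound:
  assumes "\<And>t. t \<le> 2 \<Longrightarrow> expo t a < B"
  shows "dg B a < B * B * B"
proof -
  have a0: "expo 0 a \<le> B - 1" and a1: "expo 1 a \<le> B - 1" and a2: "expo 2 a \<le> B - 1"
    using assms[of 0] assms[of 1] assms[of 2] by auto
  have "dg B a \<le> (B - 1) + B * (B - 1) + B * B * (B - 1)"
    unfolding dg_def using a0 a1 a2 by (intro add_mono mult_le_mono) auto
  also have "\<dots> < B * B * B" using assms[of 0]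
    by (cases B) (auto simp: algebra_simps)
  finally show ?thesis .
qed

lemma dg_inj:
  assumes "\<And>t. t \<le> 2 \<Longrightarrow> expo t a < B" "\<And>t. t \<le> 2 \<Longrightarrow> expo t b < B"
    and "dg B a = dg B b"
  shows "a = b"
proof -
  have r: "dg B x = expo 0 x + B * (expo 1 x + B * expo 2 x)" for x
    by (simp add: dg_def algebra_simps)
  have m0: "dg B a mod B = expo 0 a" "dg B b mod B = expo 0 b"
    using assms(1)[of 0] assms(2)[of 0] by (simp_all add: r)
  have d0: "dg B a div B = expo 1 a + B * expo 2 a" "dg B b div B = expo 1 b + B * expo 2 b"
    using assms(1)[of 0] assms(2)[of 0] by (simp_all add: r)
  have e0: "expo 0 a = expo 0 b" using m0 assms(3) by simp
  have "expo 1 a + B * expo 2 a = expo 1 b + B * expo 2 b" using d0 assms(3) by simp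
  hence "(expo 1 a + B * expo 2 a) mod B = (expo 1 b + B * expo 2 b) mod B"
        "(expo 1 a + B * expo 2 a) div B = (expo 1 b + B * expo 2 b) div B" by simp_all
  hence "expo 1 a = expo 1 b" "expo 2 a = expo 2 b"
    using assms(1)[of 1] assms(2)[of 1] by simp_all
  with e0 show ?thesis
    by (intro mono_eqI) (auto simp: le_Suc_eq numeral_2_eq_2)
qed

lemma int_small_mult:
  fixes d M r s :: int
  assumes "d * M = r - s" "r < M" "s < M" "r \<ge> 0" "s \<ge> 0"
  shows "d = 0"
proof (rule ccontr)
  assume "d \<noteq> 0"
  hence "d \<ge> 1 \<or> d \<le> -1" by linarith
  moreover have "M > 0" using assms by linarith
  moreover have "d * M \<ge> M" if "d \<ge> 1" using mult_right_mono[OF that, of M] \<open>M > 0\<close> by simp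
  moreover have "d * M \<le> -M" if "d \<le> -1" using mult_right_mono[OF that, of M] \<open>M > 0\<close> by simp
  ultimately have "d * M \<ge> M \<or> d * M \<le> -M" by blast
  thus False using assms by linarith
qed

lemma prod_max:
  fixes g :: "mono \<Rightarrow> int" and P Q :: cpoly
  assumes add: "\<And>a b. g (a + b) = g a + g b" and P: "P \<noteq> 0" and Q: "Q \<noteq> 0"
  obtains a0 b0 where "a0 \<in> Poly_Mapping.keys P" "b0 \<in> Poly_Mapping.keys Q"
    "\<And>a. a \<in> Poly_Mapping.keys P \<Longrightarrow> g a \<le> g a0"
    "\<And>b. b \<in> Poly_Mapping.keys Q \<Longrightarrow> g b \<le> g b0"
    "Poly_Mapping.lookup (P * Q) (a0 + b0) = Poly_Mapping.lookup P a0 * Poly_Mapping.lookup Q b0"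
    "a0 + b0 \<in> Poly_Mapping.keys (P * Q)"
proof -
  define K where "K = Poly_Mapping.keys P \<union> Poly_Mapping.keys Q"
  have finK: "finite K" by (simp add: K_def)
  define B where "B = Suc (\<Sum>a\<in>K. expo 0 a + expo 1 a + expo 2 a)"
  have Bb: "expo t a < B" if "a \<in> K" "t \<le> 2" for a t
  proof -
    have "expo 0 a + expo 1 a + expo 2 a \<le> (\<Sum>a\<in>K. expo 0 a + expo 1 a + expo 2 a)"
      using finK that(1) by (intro member_le_sum) auto
    moreover have "expo t a \<le> expo 0 a + expo 1 a + expo 2 a" using that(2)
      by (auto simp: le_Suc_eq numeral_2_eq_2)
    ultimately show ?thesis by (simp add: B_def)
  qed
  define f where "f a = g a * int (B * B * B) + int (dg B a)" for a
  have fadd: "f (a + b) = f a + f b" for a b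
    by (simp add: f_def add dg_add algebra_simps)
  have key: "\<exists>x0\<in>Poly_Mapping.keys R. (\<forall>x\<in>Poly_Mapping.keys R. x \<noteq> x0 \<longrightarrow> f x < f x0) \<and> (\<forall>x\<in>Poly_Mapping.keys R. g x \<le> g x0)"
    if R: "R \<noteq> 0" "Poly_Mapping.keys R \<subseteq> K" for R :: cpoly
  proof -
    have ne: "Poly_Mapping.keys R \<noteq> {}" using R(1) by simp
    have fin: "finite (f ` Poly_Mapping.keys R)" by simp
    obtain x0 where x0: "x0 \<in> Poly_Mapping.keys R" "f x0 = Max (f ` Poly_Mapping.keys R)"
      using Max_in[OF fin] ne by (metis (no_types, lifting) empty_is_image imageE)
    have le: "f x \<le> f x0" if "x \<in> Poly_Mapping.keys R" for x
      using x0(2) fin that by simp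
    have dgb: "dg B x < B * B * B" if "x \<in> Poly_Mapping.keys R" for x
      using that R(2) by (intro dg_bound) (auto intro!: Bb)
    have lt: "f x < f x0" if "x \<in> Poly_Mapping.keys R" "x \<noteq> x0" for x
    proof -
      have "f x \<noteq> f x0"
      proof
        assume eq: "f x = f x0"
        have "g x = g x0 \<and> dg B x = dg B x0"
        proof -
          have h1: "int (dg B x) < int (B*B*B)" "int (dg B x0) < int (B*B*B)"
            using dgb[OF that(1)] dgb[OF x0(1)] of_nat_less_iff by blast+
          have "(g x - g x0) * int (B*B*B) = int (dg B x0) - int (dg B x)"
            using eq by (simp add: f_def algebra_simps)
          moreover have "int (dg B x) \<ge> 0" "int (dg B x0) \<ge> 0" by simp_all
          ultimately have "g x - g x0 = 0"
            using h1 int_small_mult by blast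
          thus ?thesis using eq by (simp add: f_def)
        qed
        moreover have "expo t x < B" "expo t x0 < B" if "t \<le> 2" for t
          using Bb \<open>x \<in> Poly_Mapping.keys R\<close> x0(1) R(2) that by blast+
        ultimately have "x = x0" using dg_inj[of x B x0] by blast
        thus False using that(2) by simp
      qed
      thus ?thesis using le[OF that(1)] by simp
    qed
    have gle: "g x \<le> g x0" if "x \<in> Poly_Mapping.keys R" for x
    proof (rule ccontr)
      assume "\<not> g x \<le> g x0"
      hence "g x \<ge> g x0 + 1" by simp
      hence "g x * int (B*B*B) \<ge> (g x0 + 1) * int (B*B*B)"
        by (intro mult_right_mono) auto
      moreover have "int (dg B x0) < int (B*B*B)" using dgb[OF x0(1)] of_nat_less_iff by blast
      ultimately have "f x > f x0" by (simp add: f_def algebra_simps)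
      thus False using le[OF that] by simp
    qed
    show ?thesis using x0(1) lt gle by blast
  qed
  obtain a0 where a0: "a0 \<in> Poly_Mapping.keys P" "\<And>x. x\<in>Poly_Mapping.keys P \<Longrightarrow> x \<noteq> a0 \<Longrightarrow> f x < f a0"
      "\<And>x. x\<in>Poly_Mapping.keys P \<Longrightarrow> g x \<le> g a0"
    using key[of P] P unfolding K_def by blast
  obtain b0 where b0: "b0 \<in> Poly_Mapping.keys Q" "\<And>x. x\<in>Poly_Mapping.keys Q \<Longrightarrow> x \<noteq> b0 \<Longrightarrow> f x < f b0"
      "\<And>x. x\<in>Poly_Mapping.keys Q \<Longrightarrow> g x \<le> g b0"
    using key[of Q] Q unfolding K_def by blast
  have lk: "Poly_Mapping.lookup (P * Q) (a0 + b0) = Poly_Mapping.lookup P a0 * Poly_Mapping.lookup Q b0"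
    by (rule top_key[of f]) (use fadd a0 b0 in blast)+
  have kk: "a0 + b0 \<in> Poly_Mapping.keys (P * Q)"
    using lk a0(1) b0(1) by (simp add: in_keys_iff)
  from a0(1) b0(1) a0(3) b0(3) lk kk show ?thesis by (rule that)
qed

lemma unitv_le:
  assumes t: "t \<le> 2" and h: "m - unitv t = \<mu>" and nz: "expo t m \<noteq> 0"
  shows "m = \<mu> + unitv t"
proof (rule mono_eqI)
  fix s :: nat assume s: "s \<le> 2"
  have "expo s (m - unitv t) = expo s \<mu>" using h by simp
  thus "expo s m = expo s (\<mu> + unitv t)" using s t nz by (simp split: if_splits)
qed

lemma minus_unitv: "t \<le> 2 \<Longrightarrow> (\<mu> + unitv t) - unitv t = \<mu>"
  by (rule mono_eqI) simp

lemma lookup_pd: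
  assumes t: "t \<le> 2"
  shows "Poly_Mapping.lookup (pd t P) \<mu> = of_nat (expo t \<mu> + 1) * Poly_Mapping.lookup P (\<mu> + unitv t)"
proof -
  have "Poly_Mapping.lookup (pd t P) \<mu> =
    (\<Sum>m\<in>Poly_Mapping.keys P. if m - unitv t = \<mu> then of_nat (expo t m) * Poly_Mapping.lookup P m else 0)"
    unfolding pd_def by (rule lookup_sum_single)
  also have "\<dots> = (\<Sum>m\<in>Poly_Mapping.keys P. if m = \<mu> + unitv t then of_nat (expo t m) * Poly_Mapping.lookup P m else 0)"
  proof (intro sum.cong refl)
    fix m
    show "(if m - unitv t = \<mu> then of_nat (expo t m) * Poly_Mapping.lookup P m else 0) =
          (if m = \<mu> + unitv t then of_nat (expo t m) * Poly_Mapping.lookup P m else 0)"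
    proof (cases "expo t m = 0")
      case True
      have "m \<noteq> \<mu> + unitv t"
      proof
        assume "m = \<mu> + unitv t"
        hence "expo t m = expo t \<mu> + 1" using t by simp
        thus False using True by simp
      qed
      thus ?thesis using True by simp
    next
      case False
      have "m - unitv t = \<mu> \<longleftrightarrow> m = \<mu> + unitv t"
        using unitv_le[OF t, of m \<mu>] minus_unitv[OF t, of \<mu>] False by blast
      thus ?thesis by simp
    qed
  qed
  also have "\<dots> = of_nat (expo t \<mu> + 1) * Poly_Mapping.lookup P (\<mu> + unitv t)"
    using t by (simp add: sum.delta' in_keys_iff)
  finally show ?thesis .
qed

lemma pd_add: "t \<le> 2 \<Longrightarrow> pd t (P + Q) = pd t P + pd t Q"
  by (rule poly_mapping_eqI) (simp add: lookup_pd lookup_add algebra_simps)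

lemma pd_zero[simp]: "pd t 0 = 0"
  by (simp add: pd_def)

lemma pd_sum: "t \<le> 2 \<Longrightarrow> pd t (\<Sum>x\<in>A. f x) = (\<Sum>x\<in>A. pd t (f x))"
  by (induction A rule: infinite_finite_induct) (simp_all add: pd_add)

lemma pd_single: assumes t: "t \<le> 2"
  shows "pd t (Poly_Mapping.single a c) = Poly_Mapping.single (a - unitv t) (of_nat (expo t a) * c)"
proof (rule poly_mapping_eqI)
  fix \<mu>
  show "Poly_Mapping.lookup (pd t (Poly_Mapping.single a c)) \<mu> =
        Poly_Mapping.lookup (Poly_Mapping.single (a - unitv t) (of_nat (expo t a) * c)) \<mu>"
  proof (cases "expo t a = 0")
    case True
    have "a \<noteq> \<mu> + unitv t"
    proof
      assume "a = \<mu> + unitv t"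
      hence "expo t a = expo t \<mu> + 1" using t by simp
      thus False using True by simp
    qed
    thus ?thesis using True t by (simp add: lookup_pd lookup_single when_def)
  next
    case False
    have "a - unitv t = \<mu> \<longleftrightarrow> a = \<mu> + unitv t"
      using unitv_le[OF t, of a \<mu>] minus_unitv[OF t, of \<mu>] False by blast
    thus ?thesis using t by (simp add: lookup_pd lookup_single when_def)
  qed
qed

lemma pd_single_mult: assumes t: "t \<le> 2"
  shows "pd t (Poly_Mapping.single a c * Poly_Mapping.single b d) =
    pd t (Poly_Mapping.single a c) * Poly_Mapping.single b d + Poly_Mapping.single a c * pd t (Poly_Mapping.single b d)"
proof -
  have e1: "Poly_Mapping.single (a - unitv t + b) (of_nat (expo t a) * c * d) =
            Poly_Mapping.single (a + b - unitv t) (of_nat (expo t a) * c * d)"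
  proof (cases "expo t a = 0")
    case False
    hence "a - unitv t + b = a + b - unitv t" using t by (intro mono_eqI) simp
    thus ?thesis by simp
  qed simp
  have e2: "Poly_Mapping.single (a + (b - unitv t)) (c * (of_nat (expo t b) * d)) =
            Poly_Mapping.single (a + b - unitv t) (of_nat (expo t b) * c * d)"
  proof (cases "expo t b = 0")
    case False
    hence "a + (b - unitv t) = a + b - unitv t" using t by (intro mono_eqI) simp
    thus ?thesis by (simp add: algebra_simps)
  qed simp
  have "pd t (Poly_Mapping.single a c * Poly_Mapping.single b d) =
        Poly_Mapping.single (a + b - unitv t) (of_nat (expo t a) * c * d + of_nat (expo t b) * c * d)"
    using t by (simp add: mult_single pd_single algebra_simps)
  also have "\<dots> = Poly_Mapping.single (a - unitv t + b) (of_nat (expo t a) * c * d) +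
       Poly_Mapping.single (a + (b - unitv t)) (c * (of_nat (expo t b) * d))"
    by (simp add: e1 e2 single_add)
  also have "\<dots> = pd t (Poly_Mapping.single a c) * Poly_Mapping.single b d + Poly_Mapping.single a c * pd t (Poly_Mapping.single b d)"
    using t by (simp add: mult_single pd_single algebra_simps)
  finally show ?thesis .
qed

lemma pd_mult: assumes t: "t \<le> 2"
  shows "pd t (P * Q) = pd t P * Q + P * pd t Q"
proof -
  let ?A = "Poly_Mapping.keys P" and ?B = "Poly_Mapping.keys Q"
  let ?s = "\<lambda>a. Poly_Mapping.single a (Poly_Mapping.lookup P a)"
  let ?r = "\<lambda>b. Poly_Mapping.single b (Poly_Mapping.lookup Q b)"
  have P: "P = (\<Sum>a\<in>?A. ?s a)" and Q: "Q = (\<Sum>b\<in>?B. ?r b)"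
    by (rule poly_sum_single_sup; simp)+
  have "pd t (P * Q) = pd t ((\<Sum>a\<in>?A. ?s a) * (\<Sum>b\<in>?B. ?r b))" using P Q by simp
  also have "\<dots> = (\<Sum>a\<in>?A. \<Sum>b\<in>?B. pd t (?s a * ?r b))"
    using t by (simp add: sum_distrib_left sum_distrib_right pd_sum sum.swap[of _ ?B])
  also have "\<dots> = (\<Sum>a\<in>?A. \<Sum>b\<in>?B. pd t (?s a) * ?r b + ?s a * pd t (?r b))"
    using t by (simp add: pd_single_mult)
  also have "\<dots> = pd t (\<Sum>a\<in>?A. ?s a) * (\<Sum>b\<in>?B. ?r b) + (\<Sum>a\<in>?A. ?s a) * pd t (\<Sum>b\<in>?B. ?r b)"
    using t by (simp add: sum_distrib_left sum_distrib_right pd_sum sum.distrib sum.swap[of _ ?B])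
  finally show ?thesis using P Q by simp
qed

lemma cst_mult: "cst a * cst b = cst (a * b)" by (simp add: cst_def mult_single)
lemma cst_one[simp]: "cst 1 = 1" by (simp add: cst_def)
lemma cst_zero[simp]: "cst 0 = 0" by (simp add: cst_def)
lemma cst_add: "cst (a + b) = cst a + cst b" by (simp add: cst_def single_add)
lemma cst_uminus: "cst (- a) = - cst a" by (simp add: cst_def single_uminus)
lemma cst_diff: "cst (a - b) = cst a - cst b" by (simp add: cst_def single_diff)

lemma lookup_cst_mult[simp]: "Poly_Mapping.lookup (cst c * R) x = c * Poly_Mapping.lookup R x"
proof -
  have "Poly_Mapping.lookup (cst c * R) x =
    (\<Sum>a\<in>{0}. \<Sum>b\<in>Poly_Mapping.keys R. if a + b = x then Poly_Mapping.lookup (cst c) a * Poly_Mapping.lookup R b else 0)"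
    by (rule lookup_mult_fin) (auto simp: cst_def)
  also have "\<dots> = c * Poly_Mapping.lookup R x"
    by (simp add: cst_def sum.delta in_keys_iff)
  finally show ?thesis .
qed

definition scl :: "(mono \<Rightarrow> complex) \<Rightarrow> cpoly \<Rightarrow> cpoly" where
  "scl w P = (\<Sum>a\<in>Poly_Mapping.keys P. Poly_Mapping.single a (w a * Poly_Mapping.lookup P a))"

lemma lookup_scl[simp]: "Poly_Mapping.lookup (scl w P) x = w x * Poly_Mapping.lookup P x"
  unfolding scl_def lookup_sum_single by (simp add: sum.delta in_keys_iff)

lemma keys_scl: "Poly_Mapping.keys (scl w P) \<subseteq> Poly_Mapping.keys P"
  by (auto simp: in_keys_iff)

lemma scl_add: "scl w (P + Q) = scl w P + scl w Q"
  by (rule poly_mapping_eqI) (simp add: lookup_add algebra_simps)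

lemma scl_single: "scl w (Poly_Mapping.single a c) = Poly_Mapping.single a (w a * c)"
  by (rule poly_mapping_eqI) (simp add: lookup_single when_def)

lemma scl_mult:
  assumes w: "\<And>a b. w (a + b) = w a * w b"
  shows "scl w (P * Q) = scl w P * scl w Q"
proof (rule poly_mapping_eqI)
  fix x
  have "Poly_Mapping.lookup (scl w P * scl w Q) x =
    (\<Sum>a\<in>Poly_Mapping.keys P. \<Sum>b\<in>Poly_Mapping.keys Q. if a + b = x then Poly_Mapping.lookup (scl w P) a * Poly_Mapping.lookup (scl w Q) b else 0)"
    by (rule lookup_mult_fin) (simp_all add: keys_scl)
  also have "\<dots> = (\<Sum>a\<in>Poly_Mapping.keys P. \<Sum>b\<in>Poly_Mapping.keys Q. w x * (if a + b = x then Poly_Mapping.lookup P a * Poly_Mapping.lookup Q b else 0))"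
    by (intro sum.cong refl) (simp add: w[symmetric])
  also have "\<dots> = w x * Poly_Mapping.lookup (P * Q) x"
    by (simp add: lookup_mult_fin[of "Poly_Mapping.keys P" P "Poly_Mapping.keys Q" Q] sum_distrib_left)
  finally show "Poly_Mapping.lookup (scl w (P * Q)) x = Poly_Mapping.lookup (scl w P * scl w Q) x" by simp
qed

lemma scl_pd:
  assumes w: "\<And>a b. w (a + b) = w a * w b" and t: "t \<le> 2"
  shows "pd t (scl w P) = cst (w (unitv t)) * scl w (pd t P)"
  by (rule poly_mapping_eqI) (simp add: lookup_pd[OF t] w algebra_simps)

lemma scl_cst_mult: "scl w (cst c * P) = cst c * scl w P"
  by (rule poly_mapping_eqI) simp

locale cfg =
  fixes l :: "nat \<times> nat \<times> nat" and i j k e \<beta> \<alpha> c1 c2 c3 N :: nat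
  assumes idx: "i \<le> 2" "j \<le> 2" "k \<le> 2" "i \<noteq> j" "i \<noteq> k" "j < k"
    and pos: "expo i l \<ge> 1" "expo j l \<ge> 1" "expo k l \<ge> 1"
    and alt: "\<alpha> < expo i l"
    and c1: "expo k l * \<beta> + expo i l * c1 = e + expo j l"
    and c2: "expo j l * \<alpha> + expo i l * c2 = e + expo k l"
    and c3: "expo j l * (expo i l - 1) + expo k l * \<beta> + expo i l * c3 = e"
    and cop: "coprime (expo j l) (expo i l)"
begin

abbreviation "m \<equiv> expo i l"
abbreviation "w1 \<equiv> expo j l"
abbreviation "w2 \<equiv> expo k l"

lemma perm3: "(i = 0 \<and> j = 1 \<and> k = 2) \<or> (i = 1 \<and> j = 0 \<and> k = 2) \<or> (i = 2 \<and> j = 0 \<and> k = 1)"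
  using idx by linarith

lemma tcases: "t \<le> 2 \<Longrightarrow> t = i \<or> t = j \<or> t = k"
  using perm3 by linarith

lemma wdeg_ijk: "wdeg l \<mu> = m * expo i \<mu> + w1 * expo j \<mu> + w2 * expo k \<mu>"
  using perm3 by (auto simp: wdeg_def)

lemma sum3: "(\<Sum>t\<le>2. f t) = f i + f j + (f k :: 'a::comm_monoid_add)"
proof -
  have "(\<Sum>t\<le>2. f t) = f 0 + f 1 + f 2" by (simp add: numeral_2_eq_2 add.commute add.left_commute)
  thus ?thesis using perm3 by (auto simp: algebra_simps)
qed

definition "b1 = mk (\<lambda>t. if t = j then 0 else if t = k then \<beta> else c1)"
definition "b2 = mk (\<lambda>t. if t = j then \<alpha> else if t = k then 0 else c2)"
definition "kap = mk (\<lambda>t. if t = j then m - 1 else if t = k then \<beta> else c3)"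
definition "kap' = kap + unitv i"

lemma expo_b1[simp]: "expo i b1 = c1" "expo j b1 = 0" "expo k b1 = \<beta>"
  using idx by (simp_all add: b1_def)
lemma expo_b2[simp]: "expo i b2 = c2" "expo j b2 = \<alpha>" "expo k b2 = 0"
  using idx by (simp_all add: b2_def)
lemma expo_kap[simp]: "expo i kap = c3" "expo j kap = m - 1" "expo k kap = \<beta>"
  using idx by (simp_all add: kap_def)
lemma expo_kap'[simp]: "expo i kap' = c3 + 1" "expo j kap' = m - 1" "expo k kap' = \<beta>"
  using idx by (simp_all add: kap'_def)

lemma unitv_ijk[simp]: "expo i (unitv i) = 1" "expo j (unitv i) = 0" "expo k (unitv i) = 0"
   "expo i (unitv j) = 0" "expo j (unitv j) = 1" "expo k (unitv j) = 0"
   "expo i (unitv k) = 0" "expo j (unitv k) = 0" "expo k (unitv k) = 1"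
  using idx by simp_all

lemma mono_eq_ijk: "expo i a = expo i b \<Longrightarrow> expo j a = expo j b \<Longrightarrow> expo k a = expo k b \<Longrightarrow> a = b"
  by (rule mono_eqI) (use tcases in blast)

definition "Xj = Poly_Mapping.single b1 1 + Poly_Mapping.single (kap + unitv j) (1::complex)"
definition "Xk = Poly_Mapping.single b2 1 + Poly_Mapping.single (kap + unitv k) (of_nat N :: complex)"
definition "Y P = Xj * pd j P + Xk * pd k P"

definition "S1 \<rho> = b1 + unitv i + (\<rho> - unitv j)"
definition "S2 \<rho> = b2 + unitv i + (\<rho> - unitv k)"

lemma single_shift:
  assumes t: "t \<le> 2"
  shows "Poly_Mapping.single (x + unitv t + (\<rho> - unitv t)) (of_nat (expo t \<rho>) * c) =
         Poly_Mapping.single (x + \<rho>) (of_nat (expo t \<rho>) * (c::complex))"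
proof (cases "expo t \<rho> = 0")
  case False
  have "x + unitv t + (\<rho> - unitv t) = x + \<rho>"
    using t False by (intro mono_eqI) simp
  thus ?thesis by simp
qed simp

lemma rep:
  "var i * Y P = (\<Sum>\<rho>\<in>Poly_Mapping.keys P.
     Poly_Mapping.single (S1 \<rho>) (of_nat (expo j \<rho>) * Poly_Mapping.lookup P \<rho>) +
     Poly_Mapping.single (S2 \<rho>) (of_nat (expo k \<rho>) * Poly_Mapping.lookup P \<rho>) +
     Poly_Mapping.single (kap' + \<rho>) (of_nat (expo j \<rho> + N * expo k \<rho>) * Poly_Mapping.lookup P \<rho>))"
proof -
  have vj: "var i * Xj = Poly_Mapping.single (unitv i + b1) 1 + Poly_Mapping.single (kap' + unitv j) 1"
    by (simp add: var_def Xj_def mult_single distrib_left kap'_def add_ac)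
  have vk: "var i * Xk = Poly_Mapping.single (unitv i + b2) 1 + Poly_Mapping.single (kap' + unitv k) (of_nat N)"
    by (simp add: var_def Xk_def mult_single distrib_left kap'_def add_ac)
  have "var i * Y P = (var i * Xj) * pd j P + (var i * Xk) * pd k P"
    by (simp add: Y_def algebra_simps)
  also have "\<dots> = (\<Sum>\<rho>\<in>Poly_Mapping.keys P.
     Poly_Mapping.single (unitv i + b1 + (\<rho> - unitv j)) (of_nat (expo j \<rho>) * Poly_Mapping.lookup P \<rho>) +
     Poly_Mapping.single (kap' + unitv j + (\<rho> - unitv j)) (of_nat (expo j \<rho>) * Poly_Mapping.lookup P \<rho>) +
     (Poly_Mapping.single (unitv i + b2 + (\<rho> - unitv k)) (of_nat (expo k \<rho>) * Poly_Mapping.lookup P \<rho>) +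
     Poly_Mapping.single (kap' + unitv k + (\<rho> - unitv k)) (of_nat N * (of_nat (expo k \<rho>) * Poly_Mapping.lookup P \<rho>))))"
    unfolding vj vk pd_def by (simp add: sum_distrib_left distrib_right mult_single sum.distrib add_ac)
  also have "\<dots> = (\<Sum>\<rho>\<in>Poly_Mapping.keys P.
     Poly_Mapping.single (S1 \<rho>) (of_nat (expo j \<rho>) * Poly_Mapping.lookup P \<rho>) +
     Poly_Mapping.single (S2 \<rho>) (of_nat (expo k \<rho>) * Poly_Mapping.lookup P \<rho>) +
     Poly_Mapping.single (kap' + \<rho>) (of_nat (expo j \<rho> + N * expo k \<rho>) * Poly_Mapping.lookup P \<rho>))"
  proof (intro sum.cong refl)
    fix \<rho>
    have a: "Poly_Mapping.single (kap' + unitv j + (\<rho> - unitv j)) (of_nat (expo j \<rho>) * Poly_Mapping.lookup P \<rho>)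
        = Poly_Mapping.single (kap' + \<rho>) (of_nat (expo j \<rho>) * Poly_Mapping.lookup P \<rho>)"
      by (rule single_shift) (rule idx)
    have b: "Poly_Mapping.single (kap' + unitv k + (\<rho> - unitv k)) (of_nat N * (of_nat (expo k \<rho>) * Poly_Mapping.lookup P \<rho>))
        = Poly_Mapping.single (kap' + \<rho>) (of_nat (expo k \<rho>) * (of_nat N * Poly_Mapping.lookup P \<rho>))"
      using single_shift[OF idx(3), of kap' \<rho> "of_nat N * Poly_Mapping.lookup P \<rho>"] by (simp add: algebra_simps)
    show "Poly_Mapping.single (unitv i + b1 + (\<rho> - unitv j)) (of_nat (expo j \<rho>) * Poly_Mapping.lookup P \<rho>) +
     Poly_Mapping.single (kap' + unitv j + (\<rho> - unitv j)) (of_nat (expo j \<rho>) * Poly_Mapping.lookup P \<rho>) +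
     (Poly_Mapping.single (unitv i + b2 + (\<rho> - unitv k)) (of_nat (expo k \<rho>) * Poly_Mapping.lookup P \<rho>) +
     Poly_Mapping.single (kap' + unitv k + (\<rho> - unitv k)) (of_nat N * (of_nat (expo k \<rho>) * Poly_Mapping.lookup P \<rho>))) =
     Poly_Mapping.single (S1 \<rho>) (of_nat (expo j \<rho>) * Poly_Mapping.lookup P \<rho>) +
     Poly_Mapping.single (S2 \<rho>) (of_nat (expo k \<rho>) * Poly_Mapping.lookup P \<rho>) +
     Poly_Mapping.single (kap' + \<rho>) (of_nat (expo j \<rho> + N * expo k \<rho>) * Poly_Mapping.lookup P \<rho>)"
      unfolding a b S1_def S2_def
      by (simp add: add_ac single_add[symmetric] algebra_simps)
  qed
  finally show ?thesis .
qed

end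

lemma cof_bound:
  fixes g :: "mono \<Rightarrow> int" and F \<Theta> R :: cpoly
  assumes add: "\<And>a b. g (a + b) = g a + g b" and F: "F \<noteq> 0" and R: "F * \<Theta> = R"
    and hyp: "\<And>\<tau>. \<tau> \<in> Poly_Mapping.keys R \<Longrightarrow> \<exists>\<rho>\<in>Poly_Mapping.keys F. g \<tau> \<le> g \<rho> + K"
    and th: "\<theta> \<in> Poly_Mapping.keys \<Theta>"
  shows "g \<theta> \<le> K"
proof -
  have T: "\<Theta> \<noteq> 0" using th by auto
  obtain a0 b0 where a0: "a0 \<in> Poly_Mapping.keys F" and b0: "b0 \<in> Poly_Mapping.keys \<Theta>"
    and ga: "\<And>a. a \<in> Poly_Mapping.keys F \<Longrightarrow> g a \<le> g a0"
    and gb: "\<And>b. b \<in> Poly_Mapping.keys \<Theta> \<Longrightarrow> g b \<le> g b0"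
    and kk: "a0 + b0 \<in> Poly_Mapping.keys (F * \<Theta>)"
    by (rule prod_max[OF add F T]) blast
  obtain \<rho> where \<rho>: "\<rho> \<in> Poly_Mapping.keys F" "g (a0 + b0) \<le> g \<rho> + K"
    using hyp kk R by blast
  have "g a0 + g b0 \<le> g a0 + K" using \<rho> ga[OF \<rho>(1)] add by smt
  thus ?thesis using gb[OF th] by simp
qed

context cfg begin

lemma lookup_vY:
  "Poly_Mapping.lookup (var i * Y P) t = (\<Sum>\<rho>\<in>Poly_Mapping.keys P.
     (if S1 \<rho> = t then of_nat (expo j \<rho>) * Poly_Mapping.lookup P \<rho> else 0) +
     (if S2 \<rho> = t then of_nat (expo k \<rho>) * Poly_Mapping.lookup P \<rho> else 0) +
     (if kap' + \<rho> = t then of_nat (expo j \<rho> + N * expo k \<rho>) * Poly_Mapping.lookup P \<rho> else 0))"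
  unfolding rep lookup_sum by (intro sum.cong refl) (simp only: lookup_add lookup_single when_def)

lemma keys_vY:
  assumes "\<tau> \<in> Poly_Mapping.keys (var i * Y P)"
  shows "\<exists>\<rho>\<in>Poly_Mapping.keys P. (\<tau> = S1 \<rho> \<and> expo j \<rho> \<ge> 1) \<or> (\<tau> = S2 \<rho> \<and> expo k \<rho> \<ge> 1) \<or> \<tau> = kap' + \<rho>"
proof (rule ccontr)
  assume H: "\<not> ?thesis"
  have "Poly_Mapping.lookup (var i * Y P) \<tau> = 0"
    unfolding lookup_vY
  proof (intro sum.neutral ballI)
    fix \<rho> assume r: "\<rho> \<in> Poly_Mapping.keys P"
    show "(if S1 \<rho> = \<tau> then of_nat (expo j \<rho>) * Poly_Mapping.lookup P \<rho> else 0) +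
     (if S2 \<rho> = \<tau> then of_nat (expo k \<rho>) * Poly_Mapping.lookup P \<rho> else 0) +
     (if kap' + \<rho> = \<tau> then of_nat (expo j \<rho> + N * expo k \<rho>) * Poly_Mapping.lookup P \<rho> else 0) = 0"
    proof -
      have h1: "\<not> (\<tau> = S1 \<rho> \<and> expo j \<rho> \<ge> 1)" "\<not> (\<tau> = S2 \<rho> \<and> expo k \<rho> \<ge> 1)" "\<tau> \<noteq> kap' + \<rho>"
        using H r by blast+
      have "(if S1 \<rho> = \<tau> then of_nat (expo j \<rho>) * Poly_Mapping.lookup P \<rho> else 0) = (0::complex)"
        using h1(1) by (cases "S1 \<rho> = \<tau>") auto
      moreover have "(if S2 \<rho> = \<tau> then of_nat (expo k \<rho>) * Poly_Mapping.lookup P \<rho> else 0) = (0::complex)"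
        using h1(2) by (cases "S2 \<rho> = \<tau>") auto
      moreover have "(if kap' + \<rho> = \<tau> then of_nat (expo j \<rho> + N * expo k \<rho>) * Poly_Mapping.lookup P \<rho> else 0) = (0::complex)"
        using h1(3) by auto
      ultimately show ?thesis by simp
    qed
  qed
  thus False using assms by (simp add: in_keys_iff)
qed

lemma expo_S1: "expo i (S1 \<rho>) = c1 + 1 + expo i \<rho>" "expo j (S1 \<rho>) = expo j \<rho> - 1" "expo k (S1 \<rho>) = \<beta> + expo k \<rho>"
  by (simp_all add: S1_def)
lemma expo_S2: "expo i (S2 \<rho>) = c2 + 1 + expo i \<rho>" "expo j (S2 \<rho>) = \<alpha> + expo j \<rho>" "expo k (S2 \<rho>) = expo k \<rho> - 1"
  by (simp_all add: S2_def)

lemma wdeg_S1: assumes "expo j \<rho> \<ge> 1" shows "wdeg l (S1 \<rho>) = wdeg l \<rho> + e + m"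
proof -
  obtain r where r: "expo j \<rho> = Suc r" using assms by (cases "expo j \<rho>") auto
  have "wdeg l (S1 \<rho>) = (w2 * \<beta> + m * c1) + m + m * expo i \<rho> + w1 * r + w2 * expo k \<rho>"
    by (simp add: wdeg_ijk expo_S1 r algebra_simps)
  also have "\<dots> = (e + w1) + m + m * expo i \<rho> + w1 * r + w2 * expo k \<rho>"
    by (simp only: c1)
  also have "\<dots> = wdeg l \<rho> + e + m"
    by (simp add: wdeg_ijk r algebra_simps)
  finally show ?thesis .
qed
lemma wdeg_S2: assumes "expo k \<rho> \<ge> 1" shows "wdeg l (S2 \<rho>) = wdeg l \<rho> + e + m"
proof -
  obtain r where r: "expo k \<rho> = Suc r" using assms by (cases "expo k \<rho>") auto
  have "wdeg l (S2 \<rho>) = (w1 * \<alpha> + m * c2) + m + m * expo i \<rho> + w1 * expo j \<rho> + w2 * r"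
    by (simp add: wdeg_ijk expo_S2 r algebra_simps)
  also have "\<dots> = (e + w2) + m + m * expo i \<rho> + w1 * expo j \<rho> + w2 * r"
    by (simp only: c2)
  also have "\<dots> = wdeg l \<rho> + e + m"
    by (simp add: wdeg_ijk r algebra_simps)
  finally show ?thesis .
qed
lemma wdeg_kap': "wdeg l (kap' + \<rho>) = wdeg l \<rho> + e + m"
proof -
  have "wdeg l (kap' + \<rho>) = (w1 * (m - 1) + w2 * \<beta> + m * c3) + m + wdeg l \<rho>"
    by (simp add: wdeg_ijk algebra_simps)
  also have "\<dots> = e + m + wdeg l \<rho>" by (simp only: c3)
  also have "\<dots> = wdeg l \<rho> + e + m" by simp
  finally show ?thesis .
qed

end

lemma wdeg_add: "wdeg l (a + b) = wdeg l a + wdeg l b"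
  by (simp add: wdeg_def algebra_simps)

context cfg begin

definition "invc P A \<longleftrightarrow> var i * Y P = P * A"

lemma Y_mult: "Y (P * Q) = Y P * Q + P * Y Q"
  unfolding Y_def using idx by (simp add: pd_mult algebra_simps)

lemma inv_mult: "invc P A \<Longrightarrow> invc Q B \<Longrightarrow> invc (P * Q) (A + B)"
  unfolding invc_def
proof -
  assume a: "var i * Y P = P * A" and b: "var i * Y Q = Q * B"
  have "var i * Y (P * Q) = (var i * Y P) * Q + P * (var i * Y Q)"
    by (simp add: Y_mult algebra_simps)
  also have "\<dots> = P * Q * (A + B)" by (simp add: a b algebra_simps)
  finally show "var i * Y (P * Q) = P * Q * (A + B)" .
qed

lemma inv_one: "invc 1 0"
proof -
  have "pd t 1 = 0" if "t \<le> 2" for t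
    using pd_single[OF that, of 0 1] by simp
  thus ?thesis unfolding invc_def Y_def using idx by simp
qed

lemma cof_props:
  assumes inv: "invc F \<Theta>" and F: "F \<noteq> 0" and hom: "\<And>\<mu>. \<mu> \<in> Poly_Mapping.keys F \<Longrightarrow> wdeg l \<mu> = n"
    and th: "\<theta> \<in> Poly_Mapping.keys \<Theta>"
  shows "wdeg l \<theta> = e + m" "expo k \<theta> \<le> \<beta>" "expo j \<theta> \<le> m - 1"
proof -
  have R: "F * \<Theta> = var i * Y F" using inv by (simp add: invc_def)
  have cases: "\<exists>\<rho>\<in>Poly_Mapping.keys F. (\<tau> = S1 \<rho> \<and> expo j \<rho> \<ge> 1) \<or> (\<tau> = S2 \<rho> \<and> expo k \<rho> \<ge> 1) \<or> \<tau> = kap' + \<rho>"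
    if "\<tau> \<in> Poly_Mapping.keys (var i * Y F)" for \<tau> using keys_vY[OF that] .
  have wd: "wdeg l \<tau> = n + e + m" if tk: "\<tau> \<in> Poly_Mapping.keys (var i * Y F)" for \<tau>
  proof -
    obtain \<rho> where r: "\<rho> \<in> Poly_Mapping.keys F" "(\<tau> = S1 \<rho> \<and> expo j \<rho> \<ge> 1) \<or> (\<tau> = S2 \<rho> \<and> expo k \<rho> \<ge> 1) \<or> \<tau> = kap' + \<rho>"
      using cases[OF tk] by blast
    show ?thesis using r(2) hom[OF r(1)] wdeg_S1 wdeg_S2 wdeg_kap' by (elim disjE conjE) simp_all
  qed
  have "int (wdeg l \<theta>) \<le> int (e + m)"
  proof (rule cof_bound[of "\<lambda>\<mu>. int (wdeg l \<mu>)" F \<Theta> "var i * Y F"])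
    fix \<tau> assume t: "\<tau> \<in> Poly_Mapping.keys (var i * Y F)"
    from cases[OF t] obtain \<rho> where r: "\<rho> \<in> Poly_Mapping.keys F" by blast
    show "\<exists>\<rho>\<in>Poly_Mapping.keys F. int (wdeg l \<tau>) \<le> int (wdeg l \<rho>) + int (e + m)"
      using wd[OF t] hom[OF r] r by (intro bexI[where x=\<rho>]) simp_all
  qed (use F R th in \<open>simp_all add: wdeg_add\<close>)
  moreover have "- int (wdeg l \<theta>) \<le> - int (e + m)"
  proof (rule cof_bound[of "\<lambda>\<mu>. - int (wdeg l \<mu>)" F \<Theta> "var i * Y F"])
    fix \<tau> assume t: "\<tau> \<in> Poly_Mapping.keys (var i * Y F)"
    from cases[OF t] obtain \<rho> where r: "\<rho> \<in> Poly_Mapping.keys F" by blast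
    show "\<exists>\<rho>\<in>Poly_Mapping.keys F. - int (wdeg l \<tau>) \<le> - int (wdeg l \<rho>) + - int (e + m)"
      using wd[OF t] hom[OF r] r by (intro bexI[where x=\<rho>]) simp_all
  qed (use F R th in \<open>simp_all add: wdeg_add\<close>)
  ultimately show "wdeg l \<theta> = e + m" by simp
  have "int (expo k \<theta>) \<le> int \<beta>"
  proof (rule cof_bound[of "\<lambda>\<mu>. int (expo k \<mu>)" F \<Theta> "var i * Y F"])
    fix \<tau> assume t: "\<tau> \<in> Poly_Mapping.keys (var i * Y F)"
    from cases[OF t] obtain \<rho> where r: "\<rho> \<in> Poly_Mapping.keys F"
      "(\<tau> = S1 \<rho> \<and> expo j \<rho> \<ge> 1) \<or> (\<tau> = S2 \<rho> \<and> expo k \<rho> \<ge> 1) \<or> \<tau> = kap' + \<rho>" by blast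
    have "expo k \<tau> \<le> expo k \<rho> + \<beta>" using r(2) by (auto simp: expo_S1 expo_S2)
    thus "\<exists>\<rho>\<in>Poly_Mapping.keys F. int (expo k \<tau>) \<le> int (expo k \<rho>) + int \<beta>"
      using r(1) by (intro bexI[where x=\<rho>]) simp_all
  qed (use F R th in simp_all)
  thus "expo k \<theta> \<le> \<beta>" by simp
  have "int (expo j \<theta>) \<le> int (m - 1)"
  proof (rule cof_bound[of "\<lambda>\<mu>. int (expo j \<mu>)" F \<Theta> "var i * Y F"])
    fix \<tau> assume t: "\<tau> \<in> Poly_Mapping.keys (var i * Y F)"
    from cases[OF t] obtain \<rho> where r: "\<rho> \<in> Poly_Mapping.keys F"
      "(\<tau> = S1 \<rho> \<and> expo j \<rho> \<ge> 1) \<or> (\<tau> = S2 \<rho> \<and> expo k \<rho> \<ge> 1) \<or> \<tau> = kap' + \<rho>" by blast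
    have "expo j \<tau> \<le> expo j \<rho> + (m - 1)" using r(2) alt by (auto simp: expo_S1 expo_S2)
    thus "\<exists>\<rho>\<in>Poly_Mapping.keys F. int (expo j \<tau>) \<le> int (expo j \<rho>) + int (m - 1)"
      using r(1) by (intro bexI[where x=\<rho>]) simp_all
  qed (use F R th in simp_all)
  thus "expo j \<theta> \<le> m - 1" by simp
qed

lemma pin:
  assumes "expo k \<theta> = \<beta>" "wdeg l \<theta> = e + m" "expo j \<theta> \<le> m - 1"
  shows "\<theta> = kap'"
proof -
  have eq: "m * expo i \<theta> + w1 * expo j \<theta> = w1 * (m - 1) + m * (c3 + 1)"
    using assms(1,2) c3 unfolding wdeg_ijk by (simp add: algebra_simps)
  obtain m1 where m1: "m = Suc m1" using pos(1) by (cases m) auto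
  have eq': "m * expo i \<theta> + w1 * expo j \<theta> = w1 * m1 + m * (c3 + 1)" using eq m1 by simp
  have "int m * (int (expo i \<theta>) - int c3 - 1) = int w1 * (int m1 - int (expo j \<theta>))"
    using arg_cong[OF eq', of int] by (simp add: algebra_simps)
  hence "int m dvd int w1 * (int m1 - int (expo j \<theta>))" by (metis dvd_triv_left)
  moreover have "coprime (int m) (int w1)" using cop by (simp add: coprime_commute)
  ultimately have d: "int m dvd (int m1 - int (expo j \<theta>))"
    using coprime_dvd_mult_right_iff by blast
  have "0 \<le> int m1 - int (expo j \<theta>)" "int m1 - int (expo j \<theta>) < int m"
    using assms(3) m1 by auto
  hence "int m1 - int (expo j \<theta>) = 0" using d zdvd_imp_le[OF d] by linarith
  hence j: "expo j \<theta> = m - 1" using m1 by simp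
  hence "m * expo i \<theta> = m * (c3 + 1)" using eq by simp
  hence "m * expo i \<theta> = m * Suc c3" by simp
  hence "expo i \<theta> = c3 + 1" using pos(1) mult_left_cancel[of m "expo i \<theta>" "Suc c3"] by simp
  thus ?thesis using j assms(1) by (intro mono_eq_ijk) simp_all
qed

end

definition eta :: "nat \<Rightarrow> complex" where "eta K = cis (2 * pi / real K)"

lemma eta_pow: "K \<ge> 1 \<Longrightarrow> eta K ^ K = 1"
  by (simp add: eta_def DeMoivre)

lemma eta_pow_ne:
  assumes "0 < s" "s < K"
  shows "eta K ^ s \<noteq> 1"
proof
  assume h: "eta K ^ s = 1"
  have "eta K ^ s = cis (2 * pi * real s / real K)" by (simp add: eta_def DeMoivre mult_ac)
  with h have "cos (2 * pi * real s / real K) = 1" by (simp add: complex_eq_iff)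
  then obtain n :: int where n: "2 * pi * real s / real K = of_int n * 2 * pi"
    by (auto simp: cos_one_2pi_int)
  have K0: "real K > 0" using assms by simp
  have "2 * pi * real s = of_int n * 2 * pi * real K" using n K0 by (simp add: field_simps)
  hence "real s = of_int n * real K" using pi_gt_zero by (simp add: algebra_simps)
  moreover have "0 < real s" "real s < real K" using assms by simp_all
  ultimately have "0 < of_int n * real K" "of_int n * real K < real K" by simp_all
  hence "0 < n" "n < 1" using assms
    by (simp_all add: zero_less_mult_iff)
  thus False by simp
qed

context cfg begin

abbreviation "\<eta> \<equiv> eta (\<beta> + 1)"
definition "w r \<mu> = \<eta> ^ (r * expo k \<mu>)"

lemma eta1: "\<eta> ^ (\<beta> + 1) = 1" by (rule eta_pow) simp

lemma w_mult: "w r (a + b) = w r a * w r b"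
  by (simp add: w_def algebra_simps power_add)

lemma w_unit: "w r (unitv i) = 1" "w r (unitv j) = 1" "w r (unitv k) = \<eta> ^ r"
  by (simp_all add: w_def)

lemma scl_var: "scl (w r) (var i) = var i"
  by (simp add: var_def scl_single w_unit)

lemma scl_Xj: "scl (w r) Xj = cst (\<eta> ^ (r * \<beta>)) * Xj"
  by (simp add: Xj_def scl_add scl_single w_def cst_def mult_single distrib_left)

lemma scl_Xk: "scl (w r) Xk = Xk"
proof -
  have "\<eta> ^ (r * (\<beta> + 1)) = 1" by (metis eta1 mult.commute power_mult power_one)
  thus ?thesis by (simp add: Xk_def scl_add scl_single w_def)
qed

lemma Y_scl: "Y (scl (w r) P) = cst (\<eta> ^ r) * scl (w r) (Y P)"
proof -
  have e: "\<eta> ^ r * \<eta> ^ (r * \<beta>) = 1"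
    by (metis eta1 mult.commute power_add power_mult power_one mult_Suc_right Suc_eq_plus1)
  have "cst (\<eta> ^ r) * scl (w r) (Y P) = cst (\<eta> ^ r) * (scl (w r) Xj * scl (w r) (pd j P) + scl (w r) Xk * scl (w r) (pd k P))"
    by (simp add: Y_def scl_add scl_mult[OF w_mult])
  also have "\<dots> = cst (\<eta> ^ r * \<eta> ^ (r * \<beta>)) * Xj * scl (w r) (pd j P) + cst (\<eta> ^ r) * Xk * scl (w r) (pd k P)"
    by (simp add: scl_Xj scl_Xk algebra_simps cst_mult[symmetric])
  also have "\<dots> = Xj * scl (w r) (pd j P) + cst (\<eta> ^ r) * Xk * scl (w r) (pd k P)"
    by (simp only: e cst_one mult_1_left)
  also have "\<dots> = Y (scl (w r) P)"
    using idx by (simp add: Y_def scl_pd[OF w_mult] w_unit algebra_simps)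
  finally show ?thesis by simp
qed

lemma inv_scl: "invc P A \<Longrightarrow> invc (scl (w r) P) (cst (\<eta> ^ r) * scl (w r) A)"
  unfolding invc_def
proof -
  assume a: "var i * Y P = P * A"
  have "var i * Y (scl (w r) P) = cst (\<eta> ^ r) * scl (w r) (var i * Y P)"
    by (simp add: Y_scl scl_mult[OF w_mult] scl_var algebra_simps)
  also have "\<dots> = scl (w r) P * (cst (\<eta> ^ r) * scl (w r) A)"
    by (simp add: a scl_mult[OF w_mult] algebra_simps)
  finally show "var i * Y (scl (w r) P) = scl (w r) P * (cst (\<eta> ^ r) * scl (w r) A)" .
qed

lemma inv_prod: "invc F \<Theta> \<Longrightarrow> invc (\<Prod>r<K. scl (w r) F) (\<Sum>r<K. cst (\<eta> ^ r) * scl (w r) \<Theta>)"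
proof (induction K)
  case 0 thus ?case using inv_one by simp
next
  case (Suc K)
  have "invc ((\<Prod>r<K. scl (w r) F) * scl (w K) F) ((\<Sum>r<K. cst (\<eta> ^ r) * scl (w r) \<Theta>) + cst (\<eta> ^ K) * scl (w K) \<Theta>)"
    by (rule inv_mult[OF Suc.IH[OF Suc.prems] inv_scl[OF Suc.prems]])
  thus ?case by simp
qed

lemma avg_cof:
  assumes inv: "invc F \<Theta>" and F: "F \<noteq> 0" and hom: "\<And>\<mu>. \<mu> \<in> Poly_Mapping.keys F \<Longrightarrow> wdeg l \<mu> = n"
  shows "(\<Sum>r<\<beta>+1. cst (\<eta> ^ r) * scl (w r) \<Theta>) = Poly_Mapping.single kap' (of_nat (\<beta> + 1) * Poly_Mapping.lookup \<Theta> kap')"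
proof (rule poly_mapping_eqI)
  fix \<mu>
  have L: "Poly_Mapping.lookup (\<Sum>r<\<beta>+1. cst (\<eta> ^ r) * scl (w r) \<Theta>) \<mu> =
       Poly_Mapping.lookup \<Theta> \<mu> * (\<Sum>r<\<beta>+1. (\<eta> ^ (expo k \<mu> + 1)) ^ r)"
    unfolding lookup_sum lookup_cst_mult lookup_scl w_def sum_distrib_left
    by (intro sum.cong refl) (simp add: power_add power_mult[symmetric] algebra_simps)
  show "Poly_Mapping.lookup (\<Sum>r<\<beta>+1. cst (\<eta> ^ r) * scl (w r) \<Theta>) \<mu> =
        Poly_Mapping.lookup (Poly_Mapping.single kap' (of_nat (\<beta> + 1) * Poly_Mapping.lookup \<Theta> kap')) \<mu>"
  proof (cases "\<mu> \<in> Poly_Mapping.keys \<Theta>")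
    case False
    hence z: "Poly_Mapping.lookup \<Theta> \<mu> = 0" by (simp add: in_keys_iff)
    show ?thesis unfolding L z by (simp add: lookup_single when_def z)
  next
    case True
    note pr = cof_props[OF inv F hom True]
    show ?thesis
    proof (cases "expo k \<mu> = \<beta>")
      case True
      hence "\<mu> = kap'" using pin pr by blast
      thus ?thesis unfolding L using True eta1 by (simp add: lookup_single)
    next
      case False
      hence lt: "expo k \<mu> + 1 < \<beta> + 1" using pr(2) by simp
      have ne: "\<eta> ^ (expo k \<mu> + 1) \<noteq> 1" by (rule eta_pow_ne) (use lt in simp_all)
      have "(\<eta> ^ (expo k \<mu> + 1)) ^ (\<beta> + 1) = 1"
        by (metis eta1 power_mult mult.commute power_one)
      moreover have "(\<Sum>r<\<beta>+1. (\<eta> ^ (expo k \<mu> + 1)) ^ r) = ((\<eta> ^ (expo k \<mu> + 1)) ^ (\<beta>+1) - 1) / (\<eta> ^ (expo k \<mu> + 1) - 1)"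
        by (rule geometric_sum[OF ne])
      ultimately have "(\<Sum>r<\<beta>+1. (\<eta> ^ (expo k \<mu> + 1)) ^ r) = 0" by simp
      moreover have "\<mu> \<noteq> kap'" using False by auto
      ultimately show ?thesis unfolding L by (simp add: lookup_single when_def)
    qed
  qed
qed

end

definition nn :: "complex \<Rightarrow> bool" where "nn z \<longleftrightarrow> (\<exists>r::real. r \<ge> 0 \<and> z = of_real r)"

lemma nn_0[simp]: "nn 0" and nn_nat[simp]: "nn (of_nat a)"
  by (auto simp: nn_def intro!: exI[of _ 0] exI[of _ "real a"])
lemma nn_add: "nn x \<Longrightarrow> nn y \<Longrightarrow> nn (x + y)"
  by (auto simp: nn_def) (metis add_nonneg_nonneg of_real_add)
lemma nn_mult: "nn x \<Longrightarrow> nn y \<Longrightarrow> nn (x * y)"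
  by (auto simp: nn_def) (metis mult_nonneg_nonneg of_real_mult)
lemma nn_div: "nn x \<Longrightarrow> nn y \<Longrightarrow> nn (x / y)"
  by (auto simp: nn_def) (metis divide_nonneg_nonneg of_real_divide)
lemma nn_sum: "(\<And>a. a \<in> A \<Longrightarrow> nn (f a)) \<Longrightarrow> nn (sum f A)"
  by (induction A rule: infinite_finite_induct) (auto intro: nn_add)
lemma nn_if: "nn x \<Longrightarrow> nn (if b then x else 0)" by simp

lemma nn_nat_div: "nn (y / z) \<Longrightarrow> nn (of_nat a * y / z)"
proof -
  assume "nn (y / z)"
  hence "nn (of_nat a * (y / z))" by (rule nn_mult[OF nn_nat])
  thus ?thesis by simp
qed

lemma nn_sum_zero:
  assumes "finite A" "\<And>a. a \<in> A \<Longrightarrow> nn (f a)" "sum f A = 0" "a0 \<in> A"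
  shows "f a0 = 0"
proof -
  obtain r where r: "\<And>a. a \<in> A \<Longrightarrow> r a \<ge> 0 \<and> f a = of_real (r a)"
    using assms(2) unfolding nn_def by metis
  have "sum f A = of_real (sum r A)" using r by (simp add: of_real_sum)
  hence "of_real (sum r A) = (0::complex)" using assms(3) by simp
  hence "sum r A = 0" by (simp only: of_real_eq_0_iff)
  hence "r a0 = 0" using sum_nonneg_eq_0_iff[OF assms(1)] r assms(4) by blast
  thus ?thesis using r[OF assms(4)] by simp
qed

lemma nn_add_zero: "nn x \<Longrightarrow> nn y \<Longrightarrow> x + y = 0 \<Longrightarrow> x = 0"
  by (auto simp: nn_def) (metis add_nonneg_eq_0_iff of_real_0 of_real_add of_real_eq_0_iff)

context cfg begin

lemma cS1: assumes "expo j \<rho> \<ge> 1" "S1 \<rho> = kap' + \<mu>"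
  shows "expo j \<rho> = expo j \<mu> + m \<and> expo k \<rho> = expo k \<mu>"
proof -
  have "expo j (S1 \<rho>) = expo j (kap' + \<mu>)" "expo k (S1 \<rho>) = expo k (kap' + \<mu>)" using assms(2) by simp_all
  thus ?thesis using assms(1) pos(1) by (simp add: expo_S1)
qed
lemma cS2: assumes "expo k \<rho> \<ge> 1" "S2 \<rho> = kap' + \<mu>"
  shows "expo j \<rho> + \<alpha> = expo j \<mu> + (m - 1) \<and> expo k \<rho> = expo k \<mu> + \<beta> + 1"
proof -
  have "expo j (S2 \<rho>) = expo j (kap' + \<mu>)" "expo k (S2 \<rho>) = expo k (kap' + \<mu>)" using assms(2) by simp_all
  thus ?thesis using assms(1) by (simp add: expo_S2)
qed
lemma cK1: assumes "expo j \<mu> \<ge> 1" "kap' + \<rho> = S1 \<mu>"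
  shows "expo j \<rho> + m = expo j \<mu> \<and> expo k \<rho> = expo k \<mu>"
proof -
  have "expo j (kap' + \<rho>) = expo j (S1 \<mu>)" "expo k (kap' + \<rho>) = expo k (S1 \<mu>)" using assms(2) by simp_all
  thus ?thesis using assms(1) pos(1) by (simp add: expo_S1)
qed
lemma cK2: assumes "expo k \<mu> \<ge> 1" "kap' + \<rho> = S2 \<mu>"
  shows "expo j \<rho> + (m - 1) = \<alpha> + expo j \<mu> \<and> expo k \<rho> + \<beta> + 1 = expo k \<mu>"
proof -
  have "expo j (kap' + \<rho>) = expo j (S2 \<mu>)" "expo k (kap' + \<rho>) = expo k (S2 \<mu>)" using assms(2) by simp_all
  thus ?thesis using assms(1) by (simp add: expo_S2)
qed

end

context cfg begin

lemma no_inv: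
  assumes G: "G \<noteq> 0" and hom: "\<And>\<mu>. \<mu> \<in> Poly_Mapping.keys G \<Longrightarrow> wdeg l \<mu> = nG"
    and np: "\<And>\<mu>. \<mu> \<in> Poly_Mapping.keys G \<Longrightarrow> expo j \<mu> \<noteq> 0 \<or> expo k \<mu> \<noteq> 0"
    and NG: "nG < N" and inv: "invc G (Poly_Mapping.single kap' C)"
  shows False
proof -
  define L where "L \<mu> = expo j \<mu> + N * expo k \<mu>" for \<mu>
  define K where "K = Poly_Mapping.keys G"
  define g where "g = Poly_Mapping.lookup G"
  have finK: "finite K" by (simp add: K_def)
  have gK: "g \<rho> \<noteq> 0 \<longleftrightarrow> \<rho> \<in> K" for \<rho> by (simp add: K_def g_def in_keys_iff)
  have E: "(\<Sum>\<rho>\<in>K. (if S1 \<rho> = t then of_nat (expo j \<rho>) * g \<rho> else 0) +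
                   (if S2 \<rho> = t then of_nat (expo k \<rho>) * g \<rho> else 0) +
                   (if kap' + \<rho> = t then of_nat (L \<rho>) * g \<rho> else 0)) =
           (\<Sum>\<rho>\<in>K. if \<rho> + kap' = t then g \<rho> * C else 0)" for t
  proof -
    have 1: "Poly_Mapping.lookup (var i * Y G) t = Poly_Mapping.lookup (G * Poly_Mapping.single kap' C) t"
      using inv by (simp add: invc_def)
    have "G * Poly_Mapping.single kap' C = (\<Sum>\<rho>\<in>K. Poly_Mapping.single \<rho> (g \<rho>)) * Poly_Mapping.single kap' C"
      unfolding K_def g_def using poly_sum_single_sup[of "Poly_Mapping.keys G" G] by simp
    also have "\<dots> = (\<Sum>\<rho>\<in>K. Poly_Mapping.single (\<rho> + kap') (g \<rho> * C))"
      by (simp add: sum_distrib_right mult_single)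
    finally have 2: "Poly_Mapping.lookup (G * Poly_Mapping.single kap' C) t = (\<Sum>\<rho>\<in>K. if \<rho> + kap' = t then g \<rho> * C else 0)"
      by (simp add: lookup_sum_single)
    have 3: "Poly_Mapping.lookup (var i * Y G) t = (\<Sum>\<rho>\<in>K. (if S1 \<rho> = t then of_nat (expo j \<rho>) * g \<rho> else 0) +
                   (if S2 \<rho> = t then of_nat (expo k \<rho>) * g \<rho> else 0) +
                   (if kap' + \<rho> = t then of_nat (L \<rho>) * g \<rho> else 0))"
      unfolding lookup_vY L_def K_def g_def by (rule refl)
    show ?thesis using 1 2 3 by simp
  qed
  have jb: "expo j \<mu> < N" if "\<mu> \<in> K" for \<mu>
  proof -
    have "expo j \<mu> \<le> w1 * expo j \<mu>" using pos(2) by simp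
    also have "\<dots> \<le> wdeg l \<mu>" by (simp add: wdeg_ijk)
    finally show ?thesis using hom[of \<mu>] that NG by (simp add: K_def)
  qed
  have Linj: "\<mu> = \<nu>" if "\<mu> \<in> K" "\<nu> \<in> K" "L \<mu> = L \<nu>" for \<mu> \<nu>
  proof -
    have "L \<mu> mod N = expo j \<mu>" "L \<nu> mod N = expo j \<nu>" using jb that(1,2) by (simp_all add: L_def)
    hence ej: "expo j \<mu> = expo j \<nu>" using that(3) by simp
    have N0: "N > 0" using NG by simp
    have "L \<mu> div N = expo k \<mu>" "L \<nu> div N = expo k \<nu>" using jb that(1,2) N0 by (simp_all add: L_def)
    hence ek: "expo k \<mu> = expo k \<nu>" using that(3) by simp
    have h1: "wdeg l \<mu> = nG" "wdeg l \<nu> = nG" using hom that(1,2) by (simp_all add: K_def)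
    have "m * expo i \<mu> + (w1 * expo j \<nu> + w2 * expo k \<nu>) = m * expo i \<nu> + (w1 * expo j \<nu> + w2 * expo k \<nu>)"
      using h1 ej ek unfolding wdeg_ijk by (simp add: add.assoc)
    hence "m * expo i \<mu> = m * expo i \<nu>" by (rule add_right_imp_eq)
    hence "expo i \<mu> = expo i \<nu>" using pos(1) by simp
    thus ?thesis using ej ek by (intro mono_eq_ijk)
  qed
  have up1: "L \<mu> < L \<rho>" if "expo j \<rho> \<ge> 1" "S1 \<rho> = kap' + \<mu>" for \<rho> \<mu>
    using cS1[OF that] pos(1) by (simp add: L_def)
  have up2: "L \<mu> < L \<rho>" if "expo k \<rho> \<ge> 1" "S2 \<rho> = kap' + \<mu>" "\<mu> \<in> K" for \<rho> \<mu>
  proof -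
    have c: "expo j \<rho> + \<alpha> = expo j \<mu> + (m - 1)" "expo k \<rho> = expo k \<mu> + \<beta> + 1" using cS2[OF that(1,2)] by simp_all
    have "L \<mu> < N * (expo k \<mu> + 1)" using jb[OF that(3)] by (simp add: L_def algebra_simps)
    also have "\<dots> \<le> N * expo k \<rho>" using c(2) by simp
    also have "\<dots> \<le> L \<rho>" by (simp add: L_def)
    finally show ?thesis .
  qed
  have down1: "L \<rho> < L \<mu>" if "expo j \<mu> \<ge> 1" "kap' + \<rho> = S1 \<mu>" for \<rho> \<mu>
    using cK1[OF that] pos(1) by (simp add: L_def)
  have down2: "L \<rho> < L \<mu>" if "expo k \<mu> \<ge> 1" "kap' + \<rho> = S2 \<mu>" for \<rho> \<mu>
  proof -
    have c: "expo j \<rho> + (m - 1) = \<alpha> + expo j \<mu>" "expo k \<rho> + \<beta> + 1 = expo k \<mu>" using cK2[OF that] by simp_all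
    have "expo j \<rho> \<le> expo j \<mu>" using c(1) alt by linarith
    moreover have "N * expo k \<rho> + N \<le> N * expo k \<mu>" using c(2)
      by (metis add_le_cancel_left le_add2 mult.commute mult_Suc plus_1_eq_Suc add.assoc mult_le_mono2 le_add1 add.commute)
    moreover have "N \<ge> 1" using NG by simp
    ultimately show ?thesis by (simp add: L_def)
  qed
  obtain ms where ms: "ms \<in> K" "\<And>\<mu>. \<mu> \<in> K \<Longrightarrow> L \<mu> \<le> L ms"
  proof -
    have ne: "L ` K \<noteq> {}" using G by (simp add: K_def)
    obtain ms where "ms \<in> K" "L ms = Max (L ` K)" using Max_in[OF _ ne] finK by (metis finite_imageI imageE)
    thus ?thesis using that finK by (metis Max_ge finite_imageI image_eqI)
  qed
  obtain m0 where m0: "m0 \<in> K" "\<And>\<mu>. \<mu> \<in> K \<Longrightarrow> L m0 \<le> L \<mu>"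
  proof -
    have ne: "L ` K \<noteq> {}" using G by (simp add: K_def)
    obtain m0 where "m0 \<in> K" "L m0 = Min (L ` K)" using Min_in[OF _ ne] finK by (metis finite_imageI imageE)
    thus ?thesis using that finK by (metis Min_le finite_imageI image_eqI)
  qed
  define Gs where "Gs = g ms"
  have Gs: "Gs \<noteq> 0" using ms(1) gK by (simp add: Gs_def)
  have gz: "g \<rho> = 0" if "\<rho> \<notin> K" for \<rho> using gK that by blast
  have third: "(\<Sum>\<rho>\<in>K. if kap' + \<rho> = kap' + \<mu> then of_nat (L \<rho>) * g \<rho> else 0) = of_nat (L \<mu>) * g \<mu>" for \<mu>
    using finK gz[of \<mu>] by (cases "\<mu> \<in> K") (simp_all add: sum.delta')
  have rhs: "(\<Sum>\<rho>\<in>K. if \<rho> + kap' = kap' + \<mu> then g \<rho> * C else 0) = g \<mu> * C" for \<mu>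
    using finK gz[of \<mu>] by (cases "\<mu> \<in> K") (simp_all add: sum.delta' add.commute)
  have C: "C = of_nat (L ms)"
  proof -
    have z: "(if S1 \<rho> = kap' + ms then of_nat (expo j \<rho>) * g \<rho> else 0) +
             (if S2 \<rho> = kap' + ms then of_nat (expo k \<rho>) * g \<rho> else 0) = 0" if "\<rho> \<in> K" for \<rho>
    proof -
      have "(if S1 \<rho> = kap' + ms then of_nat (expo j \<rho>) * g \<rho> else 0) = 0"
      proof (cases "S1 \<rho> = kap' + ms \<and> expo j \<rho> \<ge> 1")
        case True thus ?thesis using up1[of \<rho> ms] ms(2)[OF that] by simp
      qed auto
      moreover have "(if S2 \<rho> = kap' + ms then of_nat (expo k \<rho>) * g \<rho> else 0) = 0"
      proof (cases "S2 \<rho> = kap' + ms \<and> expo k \<rho> \<ge> 1")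
        case True thus ?thesis using up2[of \<rho> ms] ms ms(2)[OF that] by simp
      qed auto
      ultimately show ?thesis by simp
    qed
    define A where "A \<rho> = (if S1 \<rho> = kap' + ms then of_nat (expo j \<rho>) * g \<rho> else 0) +
             (if S2 \<rho> = kap' + ms then of_nat (expo k \<rho>) * g \<rho> else (0::complex))" for \<rho>
    have zs: "(\<Sum>\<rho>\<in>K. A \<rho>) = 0" by (rule sum.neutral) (use z in \<open>simp add: A_def\<close>)
    have "(\<Sum>\<rho>\<in>K. A \<rho> + (if kap' + \<rho> = kap' + ms then of_nat (L \<rho>) * g \<rho> else 0)) =
          (\<Sum>\<rho>\<in>K. if \<rho> + kap' = kap' + ms then g \<rho> * C else 0)"
      using E[of "kap' + ms"] unfolding A_def by (simp only: add.assoc)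
    hence "(\<Sum>\<rho>\<in>K. A \<rho>) + (\<Sum>\<rho>\<in>K. if kap' + \<rho> = kap' + ms then of_nat (L \<rho>) * g \<rho> else 0) =
          (\<Sum>\<rho>\<in>K. if \<rho> + kap' = kap' + ms then g \<rho> * C else 0)"
      by (simp only: sum.distrib)
    hence "of_nat (L ms) * g ms = g ms * C" unfolding zs third rhs by simp
    thus ?thesis using Gs by (simp add: Gs_def)
  qed
  have P: "\<forall>\<mu>. \<mu> \<in> K \<longrightarrow> L ms - L \<mu> = d \<longrightarrow> nn (g \<mu> / Gs)" for d
  proof (induction d rule: less_induct)
    case (less d)
    show ?case
    proof (intro allI impI)
      fix \<mu> assume \<mu>: "\<mu> \<in> K" "L ms - L \<mu> = d"
      show "nn (g \<mu> / Gs)"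
      proof (cases "\<mu> = ms")
        case True
        hence "g \<mu> / Gs = of_real 1" using Gs by (simp add: Gs_def)
        thus ?thesis unfolding nn_def by (intro exI[of _ 1]) simp
      next
        case False
        have lt: "L \<mu> < L ms" using ms(2)[OF \<mu>(1)] Linj[OF \<mu>(1) ms(1)] False by fastforce
        define T where "T \<rho> = (if S1 \<rho> = kap' + \<mu> then of_nat (expo j \<rho>) * g \<rho> else 0) +
             (if S2 \<rho> = kap' + \<mu> then of_nat (expo k \<rho>) * g \<rho> else 0)" for \<rho>
        have eq: "(\<Sum>\<rho>\<in>K. T \<rho>) + of_nat (L \<mu>) * g \<mu> = g \<mu> * of_nat (L ms)"
        proof -
          have "(\<Sum>\<rho>\<in>K. T \<rho> + (if kap' + \<rho> = kap' + \<mu> then of_nat (L \<rho>) * g \<rho> else 0)) =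
                (\<Sum>\<rho>\<in>K. if \<rho> + kap' = kap' + \<mu> then g \<rho> * C else 0)"
            using E[of "kap' + \<mu>"] unfolding T_def by (simp only: add.assoc)
          hence "(\<Sum>\<rho>\<in>K. T \<rho>) + (\<Sum>\<rho>\<in>K. if kap' + \<rho> = kap' + \<mu> then of_nat (L \<rho>) * g \<rho> else 0) =
                (\<Sum>\<rho>\<in>K. if \<rho> + kap' = kap' + \<mu> then g \<rho> * C else 0)"
            by (simp only: sum.distrib)
          thus ?thesis unfolding third rhs by (simp add: C)
        qed
        have eq2: "g \<mu> = (\<Sum>\<rho>\<in>K. T \<rho>) / of_nat (L ms - L \<mu>)"
        proof -
          have "(\<Sum>\<rho>\<in>K. T \<rho>) = g \<mu> * (of_nat (L ms) - of_nat (L \<mu>))" using eq by (simp add: algebra_simps)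
          also have "of_nat (L ms) - of_nat (L \<mu>) = (of_nat (L ms - L \<mu>) :: complex)" using lt by (simp add: of_nat_diff)
          finally show ?thesis using lt by (simp add: field_simps)
        qed
        have nT: "nn (T \<rho> / Gs)" if r: "\<rho> \<in> K" for \<rho>
        proof -
          have a: "nn ((if S1 \<rho> = kap' + \<mu> then of_nat (expo j \<rho>) * g \<rho> else 0) / Gs)"
          proof (cases "S1 \<rho> = kap' + \<mu> \<and> expo j \<rho> \<ge> 1")
            case True
            have "L \<mu> < L \<rho>" using up1 True by blast
            moreover have "L \<rho> \<le> L ms" using ms(2)[OF r] .
            ultimately have dd: "L ms - L \<rho> < d" using \<mu>(2) by linarith
            have "nn (g \<rho> / Gs)" using less.IH[OF dd] r by blast
            hence "nn (of_nat (expo j \<rho>) * (g \<rho> / Gs))" using nn_mult[OF nn_nat] by blast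
            thus ?thesis using True by simp
          next
            case False
            hence "(if S1 \<rho> = kap' + \<mu> then of_nat (expo j \<rho>) * g \<rho> else 0) = 0" by auto
            thus ?thesis by simp
          qed
          have b: "nn ((if S2 \<rho> = kap' + \<mu> then of_nat (expo k \<rho>) * g \<rho> else 0) / Gs)"
          proof (cases "S2 \<rho> = kap' + \<mu> \<and> expo k \<rho> \<ge> 1")
            case True
            have "L \<mu> < L \<rho>" using up2 True \<mu>(1) by blast
            moreover have "L \<rho> \<le> L ms" using ms(2)[OF r] .
            ultimately have dd: "L ms - L \<rho> < d" using \<mu>(2) by linarith
            have "nn (g \<rho> / Gs)" using less.IH[OF dd] r by blast
            hence "nn (of_nat (expo k \<rho>) * (g \<rho> / Gs))" using nn_mult[OF nn_nat] by blast
            thus ?thesis using True by simp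
          next
            case False
            hence "(if S2 \<rho> = kap' + \<mu> then of_nat (expo k \<rho>) * g \<rho> else 0) = 0" by auto
            thus ?thesis by simp
          qed
          show ?thesis using nn_add[OF a b] unfolding T_def by (simp add: add_divide_distrib)
        qed
        have "g \<mu> / Gs = (\<Sum>\<rho>\<in>K. T \<rho> / Gs) / of_nat (L ms - L \<mu>)"
          unfolding eq2 by (simp add: sum_divide_distrib mult.commute)
        thus ?thesis using nT by (simp add: nn_div nn_sum)
      qed
    qed
  qed
  have Pn: "nn (g \<mu> / Gs)" if "\<mu> \<in> K" for \<mu> using P that by blast
  define U where "U t \<rho> = (if S1 \<rho> = t then of_nat (expo j \<rho>) * g \<rho> else 0) +
             (if S2 \<rho> = t then of_nat (expo k \<rho>) * g \<rho> else 0)" for t \<rho>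
  have nU: "nn (U t \<rho> / Gs)" if "\<rho> \<in> K" for t \<rho>
    using Pn[OF that] unfolding U_def by (auto simp: add_divide_distrib intro!: nn_add nn_nat_div)
  have fin: "(\<Sum>\<rho>\<in>K. U t \<rho>) = 0"
    if t3: "\<And>\<rho>. \<rho> \<in> K \<Longrightarrow> kap' + \<rho> \<noteq> t" for t
  proof -
    have "(\<Sum>\<rho>\<in>K. U t \<rho> + (if kap' + \<rho> = t then of_nat (L \<rho>) * g \<rho> else 0)) = (\<Sum>\<rho>\<in>K. if \<rho> + kap' = t then g \<rho> * C else 0)"
      using E[of t] unfolding U_def by simp
    moreover have "(\<Sum>\<rho>\<in>K. U t \<rho> + (if kap' + \<rho> = t then of_nat (L \<rho>) * g \<rho> else 0)) = (\<Sum>\<rho>\<in>K. U t \<rho>)"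
      using t3 by (intro sum.cong) auto
    moreover have "(\<Sum>\<rho>\<in>K. if \<rho> + kap' = t then g \<rho> * C else 0) = 0"
      using t3 by (intro sum.neutral) (auto simp: add.commute)
    ultimately show ?thesis by simp
  qed
  have zeroU: "U t m0 = 0" if "(\<Sum>\<rho>\<in>K. U t \<rho>) = 0" for t
  proof -
    have "(\<Sum>\<rho>\<in>K. U t \<rho> / Gs) = 0" using that by (simp add: sum_divide_distrib[symmetric])
    hence "U t m0 / Gs = 0" using nn_sum_zero[of K "\<lambda>\<rho>. U t \<rho> / Gs", OF finK nU _ m0(1)] by blast
    thus ?thesis using Gs by simp
  qed
  have gm0: "g m0 \<noteq> 0" using m0(1) gK by simp
  show False
  proof (cases "expo j m0 \<ge> 1")
    case True
    have "(\<Sum>\<rho>\<in>K. U (S1 m0) \<rho>) = 0"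
    proof (rule fin)
      fix \<rho> assume "\<rho> \<in> K"
      thus "kap' + \<rho> \<noteq> S1 m0" using down1[OF True] m0(2) by fastforce
    qed
    hence z: "U (S1 m0) m0 = 0" by (rule zeroU)
    have "nn (of_nat (expo j m0) * g m0 / Gs)" using Pn[OF m0(1)] by (rule nn_nat_div)
    moreover have "nn ((if S2 m0 = S1 m0 then of_nat (expo k m0) * g m0 else 0) / Gs)"
      using Pn[OF m0(1)] by (auto intro: nn_nat_div)
    moreover have "of_nat (expo j m0) * g m0 / Gs + (if S2 m0 = S1 m0 then of_nat (expo k m0) * g m0 else 0) / Gs = 0"
      using z Gs unfolding U_def by (simp add: add_divide_distrib[symmetric])
    ultimately have "of_nat (expo j m0) * g m0 / Gs = 0" by (rule nn_add_zero)
    thus False using True gm0 Gs by simp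
  next
    case False
    hence kk: "expo k m0 \<ge> 1" using np[of m0] m0(1) by (simp add: K_def)
    have "(\<Sum>\<rho>\<in>K. U (S2 m0) \<rho>) = 0"
    proof (rule fin)
      fix \<rho> assume "\<rho> \<in> K"
      thus "kap' + \<rho> \<noteq> S2 m0" using down2[OF kk] m0(2) by fastforce
    qed
    hence z: "U (S2 m0) m0 = 0" by (rule zeroU)
    have "nn (of_nat (expo k m0) * g m0 / Gs)" using Pn[OF m0(1)] by (rule nn_nat_div)
    moreover have "nn ((if S1 m0 = S2 m0 then of_nat (expo j m0) * g m0 else 0) / Gs)"
      using Pn[OF m0(1)] by (auto intro: nn_nat_div)
    moreover have "of_nat (expo k m0) * g m0 / Gs + (if S1 m0 = S2 m0 then of_nat (expo j m0) * g m0 else 0) / Gs = 0"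
      using z Gs unfolding U_def by (simp add: add_divide_distrib[symmetric] add.commute)
    ultimately have "of_nat (expo k m0) * g m0 / Gs = 0" by (rule nn_add_zero)
    thus False using kk gm0 Gs by simp
  qed
qed

end

lemma comp_scale: "comp t (scale_form c \<omega>) = cst c * comp t \<omega>"
  by (simp add: comp_def scale_form_def)

lemma wdeg_unitv: "t \<le> 2 \<Longrightarrow> wdeg l (unitv t) = expo t l"
  by (auto simp: wdeg_def unitv_def expo_def)

definition hk :: "nat \<times> nat \<times> nat \<Rightarrow> nat \<Rightarrow> cpoly \<Rightarrow> bool" where
  "hk l d P \<longleftrightarrow> (\<forall>\<mu>\<in>Poly_Mapping.keys P. wdeg l \<mu> = d)"

lemma hk_add: "hk l d P \<Longrightarrow> hk l d Q \<Longrightarrow> hk l d (P + Q)"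
  unfolding hk_def using keys_add[of P Q] by blast
lemma hk_diff: "hk l d P \<Longrightarrow> hk l d Q \<Longrightarrow> hk l d (P - Q)"
  unfolding hk_def using keys_diff[of P Q] by blast
lemma hk_single: "wdeg l a = d \<Longrightarrow> hk l d (Poly_Mapping.single a c)"
  unfolding hk_def by simp
lemma hk_mult: "hk l a P \<Longrightarrow> hk l b Q \<Longrightarrow> hk l (a + b) (P * Q)"
  unfolding hk_def
proof
  fix \<mu> assume hp: "\<forall>\<mu>\<in>Poly_Mapping.keys P. wdeg l \<mu> = a" and hq: "\<forall>\<mu>\<in>Poly_Mapping.keys Q. wdeg l \<mu> = b"
    and m: "\<mu> \<in> Poly_Mapping.keys (P * Q)"
  obtain x y where "\<mu> = x + y" "x \<in> Poly_Mapping.keys P" "y \<in> Poly_Mapping.keys Q"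
    using keys_mult[of P Q] m by blast
  thus "wdeg l \<mu> = a + b" using hp hq by (simp add: wdeg_add)
qed
lemma hk_cst: "hk l 0 (cst c)"
  unfolding hk_def cst_def by (simp add: wdeg_def)
lemma hk_var: "t \<le> 2 \<Longrightarrow> hk l (expo t l) (var t)"
  unfolding hk_def var_def by (simp add: wdeg_unitv)

context cfg begin

definition "Ci = cst (of_nat w1) * var j * Xk - cst (of_nat w2) * var k * Xj"
definition "Cj = cst (- of_nat m) * var i * Xk"
definition "Ck = cst (of_nat m) * var i * Xj"
definition "Cc t = (if t = i then Ci else if t = j then Cj else Ck)"
definition "om = (Cc 0, Cc 1, Cc 2)"

lemma comp_om: "t \<le> 2 \<Longrightarrow> comp t om = Cc t"
  by (auto simp: comp_def om_def le_Suc_eq numeral_2_eq_2)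

lemma wdeg_b1: "wdeg l b1 = e + w1" using c1 by (simp add: wdeg_ijk algebra_simps)
lemma wdeg_b2: "wdeg l b2 = e + w2" using c2 by (simp add: wdeg_ijk algebra_simps)
lemma wdeg_kap: "wdeg l kap = e"
proof -
  have "wdeg l kap = w1 * (m - 1) + w2 * \<beta> + m * c3" by (simp add: wdeg_ijk algebra_simps)
  thus ?thesis using c3 by simp
qed

lemma hk_Xj: "hk l (e + w1) Xj"
  unfolding Xj_def using idx by (intro hk_add hk_single) (simp_all add: wdeg_b1 wdeg_add wdeg_kap wdeg_unitv)
lemma hk_Xk: "hk l (e + w2) Xk"
  unfolding Xk_def using idx by (intro hk_add hk_single) (simp_all add: wdeg_b2 wdeg_add wdeg_kap wdeg_unitv)

lemma hk_Cj: "hk l (m + (e + w2)) Cj"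
  unfolding Cj_def using hk_mult[OF hk_mult[OF hk_cst hk_var[OF idx(1)]] hk_Xk] by simp
lemma hk_Ck: "hk l (m + (e + w1)) Ck"
  unfolding Ck_def using hk_mult[OF hk_mult[OF hk_cst hk_var[OF idx(1)]] hk_Xj] by simp
lemma hk_Ci: "hk l (w1 + (e + w2)) Ci"
proof -
  have a: "hk l (w1 + (e + w2)) (cst (of_nat w1) * var j * Xk)"
    using hk_mult[OF hk_mult[OF hk_cst hk_var[OF idx(2)]] hk_Xk] by simp
  have b: "hk l (w2 + (e + w1)) (cst (of_nat w2) * var k * Xj)"
    using hk_mult[OF hk_mult[OF hk_cst hk_var[OF idx(3)]] hk_Xj] by simp
  show ?thesis unfolding Ci_def using hk_diff[OF a] b by (simp add: add_ac)
qed

lemma Cj_ne: "Cj \<noteq> 0"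
proof -
  have ne: "unitv i + b2 \<noteq> unitv i + (kap + unitv k)"
  proof
    assume "unitv i + b2 = unitv i + (kap + unitv k)"
    hence "expo k (unitv i + b2) = expo k (unitv i + (kap + unitv k))" by simp
    thus False by simp
  qed
  have "Cj = Poly_Mapping.single (unitv i + b2) (- of_nat m) + Poly_Mapping.single (unitv i + (kap + unitv k)) (- of_nat m * of_nat N)"
    by (simp add: Cj_def Xk_def cst_def var_def mult_single distrib_left)
  hence "Poly_Mapping.lookup Cj (unitv i + b2) = - of_nat m"
    using ne by (simp add: lookup_add lookup_single when_def)
  thus ?thesis using pos(1) by auto
qed

definition "dd = e + m + w1 + w2"

lemma fol_om: "fol_form l dd om"
proof -
  have "om \<noteq> (0, 0, 0)"
  proof
    assume "om = (0,0,0)"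
    hence "comp j om = 0" by (simp add: comp_def)
    thus False using comp_om[OF idx(2)] Cj_ne idx by (simp add: Cc_def)
  qed
  moreover have "qhom l (int dd - int (expo t l)) (comp t om)" if t: "t \<le> 2" for t
  proof -
    have h: "hk l (dd - expo t l) (Cc t)"
    proof -
      consider "t = i" | "t = j" | "t = k" using tcases[OF t] by blast
      thus ?thesis
      proof cases
        case 1 thus ?thesis using hk_Ci by (simp add: Cc_def dd_def add_ac)
      next
        case 2 thus ?thesis using hk_Cj idx by (simp add: Cc_def dd_def add_ac)
      next
        case 3 thus ?thesis using hk_Ck idx by (simp add: Cc_def dd_def add_ac)
      qed
    qed
    have le: "expo t l \<le> dd" using tcases[OF t] by (auto simp: dd_def)
    show ?thesis using h le comp_om[OF t] unfolding hk_def qhom_def by (simp add: of_nat_diff)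
  qed
  moreover have "(\<Sum>t\<le>2. cst (of_nat (expo t l)) * var t * comp t om) = 0"
  proof -
    have "(\<Sum>t\<le>2. cst (of_nat (expo t l)) * var t * comp t om) = (\<Sum>t\<le>2. cst (of_nat (expo t l)) * var t * Cc t)"
      by (intro sum.cong refl) (simp add: comp_om)
    also have "\<dots> = cst (of_nat m) * var i * Ci + cst (of_nat w1) * var j * Cj + cst (of_nat w2) * var k * Ck"
      unfolding sum3 using idx by (simp add: Cc_def)
    also have "\<dots> = 0"
      unfolding Ci_def Cj_def Ck_def by (simp add: cst_uminus algebra_simps)
    finally show ?thesis .
  qed
  ultimately show ?thesis unfolding fol_form_def by blast
qed

end

context cfg begin

lemma evalp_pt:
  "evalp F (pt i) = (\<Sum>\<mu>\<in>Poly_Mapping.keys F. if expo j \<mu> = 0 \<and> expo k \<mu> = 0 then Poly_Mapping.lookup F \<mu> else 0)"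
  unfolding evalp_def
proof (intro sum.cong refl)
  fix \<mu>
  show "Poly_Mapping.lookup F \<mu> * fst (pt i) ^ expo 0 \<mu> * fst (snd (pt i)) ^ expo 1 \<mu> * snd (snd (pt i)) ^ expo 2 \<mu> =
        (if expo j \<mu> = 0 \<and> expo k \<mu> = 0 then Poly_Mapping.lookup F \<mu> else 0)"
    using perm3 by (auto simp: pt_def power_0_left)
qed

lemma no_pure:
  assumes h: "hk l n F" and ev: "evalp F (pt i) = 0" and \<mu>: "\<mu> \<in> Poly_Mapping.keys F"
  shows "expo j \<mu> \<noteq> 0 \<or> expo k \<mu> \<noteq> 0"
proof (rule ccontr)
  assume pu: "\<not> (expo j \<mu> \<noteq> 0 \<or> expo k \<mu> \<noteq> 0)"
  have same: "\<nu> = \<mu>" if "\<nu> \<in> Poly_Mapping.keys F" "expo j \<nu> = 0 \<and> expo k \<nu> = 0" for \<nu>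
  proof -
    have "wdeg l \<nu> = n" "wdeg l \<mu> = n" using h that(1) \<mu> by (simp_all add: hk_def)
    hence "m * expo i \<nu> = m * expo i \<mu>" using that(2) pu unfolding wdeg_ijk by simp
    hence "expo i \<nu> = expo i \<mu>" using pos(1) by simp
    thus ?thesis using that(2) pu by (intro mono_eq_ijk) simp_all
  qed
  have "evalp F (pt i) = (\<Sum>\<nu>\<in>Poly_Mapping.keys F. if \<nu> = \<mu> then Poly_Mapping.lookup F \<nu> else 0)"
    unfolding evalp_pt
  proof (intro sum.cong refl)
    fix \<nu> assume nk: "\<nu> \<in> Poly_Mapping.keys F"
    show "(if expo j \<nu> = 0 \<and> expo k \<nu> = 0 then Poly_Mapping.lookup F \<nu> else 0) =
          (if \<nu> = \<mu> then Poly_Mapping.lookup F \<nu> else 0)"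
    proof (cases "\<nu> = \<mu>")
      case True thus ?thesis using pu by simp
    next
      case False thus ?thesis using same[OF nk] by auto
    qed
  qed
  also have "\<dots> = Poly_Mapping.lookup F \<mu>" using \<mu> by simp
  finally show False using ev \<mu> by (simp add: in_keys_iff)
qed

lemma eta_ne: "\<eta> \<noteq> 0" by (simp add: eta_def)

lemma keys_sclw: "Poly_Mapping.keys (scl (w r) F) = Poly_Mapping.keys F"
  using eta_ne by (auto simp: in_keys_iff w_def)

lemma prod_props:
  assumes F: "F \<noteq> 0" and h: "hk l n F" and np: "\<And>\<mu>. \<mu> \<in> Poly_Mapping.keys F \<Longrightarrow> expo j \<mu> \<noteq> 0 \<or> expo k \<mu> \<noteq> 0"
  shows "(\<Prod>r<Suc K. scl (w r) F) \<noteq> 0 \<and> hk l (Suc K * n) (\<Prod>r<Suc K. scl (w r) F) \<and>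
         (\<forall>\<mu>\<in>Poly_Mapping.keys (\<Prod>r<Suc K. scl (w r) F). expo j \<mu> \<noteq> 0 \<or> expo k \<mu> \<noteq> 0)"
proof (induction K)
  case 0
  have "scl (w 0) F \<noteq> 0" using F keys_sclw[of 0 F] by (metis keys_eq_empty)
  moreover have "hk l n (scl (w 0) F)" using h keys_sclw[of 0 F] by (simp add: hk_def)
  ultimately show ?case using np keys_sclw[of 0 F] by simp
next
  case (Suc K)
  define P where "P = (\<Prod>r<Suc K. scl (w r) F)"
  define Q where "Q = scl (w (Suc K)) F"
  have eq: "(\<Prod>r<Suc (Suc K). scl (w r) F) = P * Q" by (simp add: P_def Q_def)
  have P: "P \<noteq> 0" "hk l (Suc K * n) P" "\<And>\<mu>. \<mu> \<in> Poly_Mapping.keys P \<Longrightarrow> expo j \<mu> \<noteq> 0 \<or> expo k \<mu> \<noteq> 0"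
    using Suc.IH by (simp_all add: P_def)
  have kQ: "Poly_Mapping.keys Q = Poly_Mapping.keys F" by (simp add: Q_def keys_sclw)
  have "Poly_Mapping.keys Q \<noteq> {}" using F kQ by simp
  hence Q0: "Q \<noteq> 0" by (metis keys_zero)
  have Q: "Q \<noteq> 0" "hk l n Q" using Q0 h kQ by (simp_all add: hk_def)
  obtain a0 b0 where "a0 + b0 \<in> Poly_Mapping.keys (P * Q)"
    by (rule prod_max[of "\<lambda>_. 0" P Q]) (use P Q in auto)
  hence "P * Q \<noteq> 0" by auto
  moreover have "hk l (Suc (Suc K) * n) (P * Q)" using hk_mult[OF P(2) Q(2)] by (simp add: add.commute)
  moreover have "expo j \<mu> \<noteq> 0 \<or> expo k \<mu> \<noteq> 0" if mk: "\<mu> \<in> Poly_Mapping.keys (P * Q)" for \<mu>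
  proof -
    obtain x y where "\<mu> = x + y" "x \<in> Poly_Mapping.keys P"
      using keys_mult[of P Q] mk by blast
    thus ?thesis using P(3)[of x] by auto
  qed
  ultimately show ?case unfolding eq by blast
qed

lemma main:
  assumes N: "N = (\<beta> + 1) * n + 1"
  shows "Cpt l i n dd \<noteq> Fol l dd"
proof
  define L0 where "L0 = {scale_form c om | c. c \<noteq> 0}"
  have "L0 \<in> Fol l dd" unfolding Fol_def L0_def using fol_om by blast
  moreover assume "Cpt l i n dd = Fol l dd"
  ultimately have "L0 \<in> Cpt l i n dd" by simp
  then obtain \<omega> F where \<omega>: "\<omega> \<in> L0" and cF: "curve_poly l n F" and invF: "invariant \<omega> F"
    and ev: "evalp F (pt i) = 0"
    unfolding Cpt_def by blast
  obtain c where c: "c \<noteq> 0" "\<omega> = scale_form c om" using \<omega> unfolding L0_def by blast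
  obtain \<Theta> where Th: "\<And>a b. a < b \<and> b \<le> 2 \<Longrightarrow> comp a \<omega> * pd b F - comp b \<omega> * pd a F = F * \<Theta> a b"
    using invF unfolding invariant_def by blast
  have "comp j \<omega> * pd k F - comp k \<omega> * pd j F = F * \<Theta> j k" using Th idx by blast
  moreover have "comp j \<omega> = cst c * Cj" "comp k \<omega> = cst c * Ck"
    using c(2) idx by (simp_all add: comp_scale comp_om Cc_def)
  ultimately have "cst c * Cj * pd k F - cst c * Ck * pd j F = F * \<Theta> j k" by simp
  moreover have "cst c * Cj * pd k F - cst c * Ck * pd j F = cst (- (c * of_nat m)) * (var i * Y F)"
    unfolding Cj_def Ck_def Y_def by (simp add: cst_uminus cst_mult[symmetric] algebra_simps)
  ultimately have e1: "cst (- (c * of_nat m)) * (var i * Y F) = F * \<Theta> j k" by simp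
  have cm: "c * of_nat m \<noteq> 0" using c(1) pos(1) by simp
  have "var i * Y F = cst (- (1 / (c * of_nat m))) * (cst (- (c * of_nat m)) * (var i * Y F))"
    using cm by (simp add: mult.assoc[symmetric] cst_mult)
  also have "\<dots> = F * (cst (- (1 / (c * of_nat m))) * \<Theta> j k)" using e1 by (simp add: algebra_simps)
  finally have inv: "invc F (cst (- (1 / (c * of_nat m))) * \<Theta> j k)" by (simp add: invc_def)
  define \<Theta>' where "\<Theta>' = cst (- (1 / (c * of_nat m))) * \<Theta> j k"
  have hF: "hk l n F" using cF unfolding curve_poly_def qhom_def hk_def by simp
  have F0: "F \<noteq> 0" using cF unfolding curve_poly_def by auto
  have npF: "\<And>\<mu>. \<mu> \<in> Poly_Mapping.keys F \<Longrightarrow> expo j \<mu> \<noteq> 0 \<or> expo k \<mu> \<noteq> 0"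
    using no_pure[OF hF ev] by blast
  have homF: "\<And>\<mu>. \<mu> \<in> Poly_Mapping.keys F \<Longrightarrow> wdeg l \<mu> = n" using hF by (simp add: hk_def)
  define G where "G = (\<Prod>r<\<beta>+1. scl (w r) F)"
  have GP: "G \<noteq> 0" "hk l ((\<beta> + 1) * n) G" "\<And>\<mu>. \<mu> \<in> Poly_Mapping.keys G \<Longrightarrow> expo j \<mu> \<noteq> 0 \<or> expo k \<mu> \<noteq> 0"
    using prod_props[OF F0 hF npF, of \<beta>] by (simp_all add: G_def)
  have "invc G (\<Sum>r<\<beta>+1. cst (\<eta> ^ r) * scl (w r) \<Theta>')"
    unfolding G_def \<Theta>'_def by (rule inv_prod[OF inv])
  hence invG: "invc G (Poly_Mapping.single kap' (of_nat (\<beta> + 1) * Poly_Mapping.lookup \<Theta>' kap'))"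
    using avg_cof[OF inv[folded \<Theta>'_def] F0 homF] by simp
  show False
    by (rule no_inv[OF GP(1) _ GP(3) _ invG, of "(\<beta> + 1) * n"]) (use GP(2) N in \<open>simp_all add: hk_def\<close>)
qed

end

lemma solve_mod:
  fixes a m c :: nat
  assumes cop: "coprime a m" and a: "a \<ge> 1" and m: "m \<ge> 1"
  shows "\<exists>b<m. (a * b) mod m = c mod m"
proof -
  obtain x y where xy: "a * x = m * y + gcd a m" using bezout_nat[of a m] a by auto
  have g: "gcd a m = 1" using cop by simp
  define b where "b = (x * c) mod m"
  have "(a * b) mod m = (a * (x * c)) mod m" unfolding b_def by (simp add: mod_mult_right_eq)
  also have "\<dots> = ((m * y + 1) * c) mod m" using xy g by (simp add: mult.assoc[symmetric])
  also have "\<dots> = (c + m * (y * c)) mod m" by (simp add: algebra_simps)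
  also have "\<dots> = c mod m" by simp
  finally show ?thesis using m unfolding b_def by (intro exI[of _ "(x * c) mod m"]) simp
qed

lemma dvd_from_mod:
  fixes x y m :: nat
  assumes "x mod m = y mod m" "y \<le> x"
  shows "\<exists>c. y + m * c = x"
proof -
  have "m dvd x - y" using assms mod_eq_dvd_iff_nat by blast
  then obtain c where "x - y = m * c" by blast
  thus ?thesis using assms(2) by (intro exI[of _ c]) simp
qed

lemma cfg_result:
  fixes l :: "nat \<times> nat \<times> nat" and i j k d n :: nat
  assumes idx: "i \<le> 2" "j \<le> 2" "k \<le> 2" "i \<noteq> j" "i \<noteq> k" "j < k"
    and pos: "expo i l \<ge> 1" "expo j l \<ge> 1" "expo k l \<ge> 1"
    and cj: "coprime (expo j l) (expo i l)" and ck: "coprime (expo k l) (expo i l)"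
    and dge: "d \<ge> expo i l + expo j l + expo k l"
    and bound: "\<And>\<beta>. \<beta> < expo i l \<Longrightarrow> (expo k l * \<beta>) mod expo i l = (d - (expo i l + expo j l + expo k l) + expo j l) mod expo i l
       \<Longrightarrow> expo j l * (expo i l - 1) + expo k l * \<beta> \<le> d - (expo i l + expo j l + expo k l)"
  shows "Cpt l i n d \<noteq> Fol l d"
proof -
  define m where "m = expo i l"
  define w1 where "w1 = expo j l"
  define w2 where "w2 = expo k l"
  define e where "e = d - (m + w1 + w2)"
  have d: "d = e + m + w1 + w2" using dge by (simp add: e_def m_def w1_def w2_def)
  obtain \<beta> where \<beta>: "\<beta> < m" "(w2 * \<beta>) mod m = (e + w1) mod m"
    using solve_mod[of w2 m "e + w1"] ck pos by (auto simp: m_def w2_def)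
  have bd: "w1 * (m - 1) + w2 * \<beta> \<le> e"
    using bound[of \<beta>] \<beta> by (simp add: m_def w1_def w2_def e_def)
  obtain \<alpha> where \<alpha>: "\<alpha> < m" "(w1 * \<alpha>) mod m = (e + w2) mod m"
    using solve_mod[of w1 m "e + w2"] cj pos by (auto simp: m_def w1_def)
  obtain c1 where c1: "w2 * \<beta> + m * c1 = e + w1"
    using dvd_from_mod[of "e + w1" m "w2 * \<beta>"] \<beta>(2) bd by auto
  have "\<alpha> \<le> m - 1" using \<alpha>(1) by linarith
  hence "w1 * \<alpha> \<le> w1 * (m - 1)" by (rule mult_le_mono2)
  hence "w1 * \<alpha> \<le> e + w2" using bd by linarith
  then obtain c2 where c2: "w1 * \<alpha> + m * c2 = e + w2"
    using dvd_from_mod[of "e + w2" m "w1 * \<alpha>"] \<alpha>(2) by auto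
  have m1: "m \<ge> 1" using pos by (simp add: m_def)
  have "m * c1 \<ge> w1 * m"
  proof -
    have "w1 * (m - 1) + w1 = w1 * m" using m1 by (simp add: algebra_simps)
    thus ?thesis using c1 bd by linarith
  qed
  hence c1w: "c1 \<ge> w1" using m1 by (simp add: mult.commute)
  define c3 where "c3 = c1 - w1"
  have c3: "w1 * (m - 1) + w2 * \<beta> + m * c3 = e"
  proof -
    have f2: "m * c3 = m * c1 - w1 * m" by (simp add: c3_def diff_mult_distrib2 mult.commute)
    have f1: "w1 * (m - 1) + w1 = w1 * m" using m1 by (simp add: algebra_simps)
    show ?thesis using f1 f2 c1 \<open>m * c1 \<ge> w1 * m\<close> by linarith
  qed
  interpret C: cfg l i j k e \<beta> \<alpha> c1 c2 c3 "(\<beta> + 1) * n + 1"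
    by unfold_locales (use idx pos \<alpha>(1) c1 c2 c3 cj in \<open>simp_all add: m_def w1_def w2_def\<close>)
  have "C.dd = d" by (simp add: C.dd_def d m_def w1_def w2_def)
  thus ?thesis using C.main[of n] by simp
qed

lemma bound_easy:
  fixes m w1 w2 d \<beta> :: nat
  assumes m: "m \<ge> 1" and d: "m * (w1 + w2 + 1) \<le> d" and b: "\<beta> < m"
  shows "w1 * (m - 1) + w2 * \<beta> \<le> d - (m + w1 + w2)"
proof -
  have "\<beta> \<le> m - 1" using b by linarith
  hence "w2 * \<beta> \<le> w2 * (m - 1)" by (rule mult_le_mono2)
  moreover have "w1 * (m - 1) + w2 * (m - 1) + (m + w1 + w2) = m * (w1 + w2 + 1)"
    using m by (cases m) (simp_all add: algebra_simps)
  ultimately show ?thesis using d by linarith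
qed

lemma bound_two:
  fixes m d \<beta> :: nat
  assumes m: "m \<ge> 2" and d: "d \<ge> 2 * m + 1" and b: "\<beta> < m"
    and md: "(1 * \<beta>) mod m = (d - (m + 1 + 1) + 1) mod m"
  shows "1 * (m - 1) + 1 * \<beta> \<le> d - (m + 1 + 1)"
proof -
  define e where "e = d - (m + 1 + 1)"
  have e: "e \<ge> m - 1" using d by (simp add: e_def)
  define q where "q = e div m"
  define r where "r = e mod m"
  have er: "e = m * q + r" by (simp add: q_def r_def)
  have rm: "r < m" using m by (simp add: r_def)
  have bm: "\<beta> = (e + 1) mod m" using md b by (simp add: e_def)
  show ?thesis
  proof (cases "\<beta> = 0")
    case True thus ?thesis using e by (simp add: e_def)
  next
    case False
    have "(e + 1) mod m = (r + 1) mod m" by (simp add: r_def mod_Suc_eq)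
    hence br: "\<beta> = (r + 1) mod m" using bm by simp
    have "r + 1 < m"
    proof (rule ccontr)
      assume "\<not> r + 1 < m"
      hence "r + 1 = m" using rm by simp
      hence "\<beta> = 0" using br by simp
      thus False using False by simp
    qed
    hence b1: "\<beta> = r + 1" using br by simp
    have "q \<ge> 1"
    proof (rule ccontr)
      assume "\<not> q \<ge> 1"
      hence "e = r" using er by simp
      thus False using e b1 b by linarith
    qed
    hence "m * q \<ge> m" by simp
    hence "e \<ge> m + r" using er by linarith
    thus ?thesis using b1 m e_def by linarith
  qed
qed

theorem corollary4p7:
  fixes l0 l1 l2 :: nat
  assumes "coprime l0 l1" and "coprime l0 l2" and "coprime l1 l2"
    and "1 \<le> l0" and "l0 \<le> l1" and "l1 \<le> l2"
  shows "(\<forall>d n i. d \<ge> l2 * l1 + l2 * l0 + l2 \<and> i \<le> 2 \<longrightarrow>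
             Cpt (l0, l1, l2) i n d \<noteq> Fol (l0, l1, l2) d)
       \<and> (l0 = 1 \<and> l1 = 1 \<and> l2 \<ge> 2 \<longrightarrow>
             (\<forall>d n. d \<ge> 2 * l2 + 1 \<longrightarrow> Cpt (l0, l1, l2) 2 n d \<noteq> Fol (l0, l1, l2) d))"
proof (intro conjI allI impI)
  have e0[simp]: "expo 0 (l0, l1, l2) = l0" "expo 1 (l0, l1, l2) = l1" "expo 2 (l0, l1, l2) = l2"
     "expo (Suc 0) (l0, l1, l2) = l1"
    by (simp_all add: expo_def)
  have p1: "l1 \<ge> 1" "l2 \<ge> 1" using assms by linarith+
  have c: "coprime l1 l0" "coprime l2 l0" "coprime l2 l1" "coprime l0 l2" "coprime l1 l2" "coprime l0 l1"
    using assms by (simp_all add: coprime_commute)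
  have m01: "l0 * l1 \<le> l2 * l1" "l1 * l0 \<le> l2 * l0" using assms by simp_all
  fix d n i :: nat assume H: "d \<ge> l2 * l1 + l2 * l0 + l2 \<and> i \<le> 2"
  hence di: "d \<ge> l2 * l1 + l2 * l0 + l2" "i \<le> 2" by simp_all
  have "l1 \<le> l2 * l1" "l0 \<le> l2 * l0" using p1 by simp_all
  hence dg: "l0 + l1 + l2 \<le> d" using di(1) by linarith
  consider "i = 0" | "i = 1" | "i = 2" using di(2) by linarith
  thus "Cpt (l0, l1, l2) i n d \<noteq> Fol (l0, l1, l2) d"
  proof cases
    case 1
    have a1: "l0 * l1 \<le> l2 * l1" "l0 \<le> l2" using assms by simp_all
    have a2: "l0 * (l1 + l2 + 1) = l0 * l1 + l2 * l0 + l0" by (simp add: algebra_simps)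
    have dd: "l0 * (l1 + l2 + 1) \<le> d" using di(1) a1 a2 by linarith
    show ?thesis unfolding 1
      by (rule cfg_result[of 0 1 2]) (use assms p1 c dd dg bound_easy[of l0 l1 l2 d] in simp_all)
  next
    case 2
    have a1: "l1 * l0 \<le> l2 * l0" "l1 \<le> l2" using assms by simp_all
    have a2: "l1 * (l0 + l2 + 1) = l1 * l0 + l2 * l1 + l1" by (simp add: algebra_simps)
    have dd: "l1 * (l0 + l2 + 1) \<le> d" using di(1) a1 a2 by linarith
    show ?thesis unfolding 2
      by (rule cfg_result[of 1 0 2]) (use assms p1 c dd dg bound_easy[of l1 l0 l2 d] in simp_all)
  next
    case 3
    have dd: "l2 * (l0 + l1 + 1) \<le> d" using di(1) by (simp add: algebra_simps)
    show ?thesis unfolding 3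
      by (rule cfg_result[of 2 0 1]) (use assms p1 c dd dg bound_easy[of l2 l0 l1 d] in simp_all)
  qed
next
  have e0[simp]: "expo 0 (l0, l1, l2) = l0" "expo 1 (l0, l1, l2) = l1" "expo 2 (l0, l1, l2) = l2"
     "expo (Suc 0) (l0, l1, l2) = l1"
    by (simp_all add: expo_def)
  fix d n :: nat assume H: "l0 = 1 \<and> l1 = 1 \<and> l2 \<ge> 2" "d \<ge> 2 * l2 + 1"
  show "Cpt (l0, l1, l2) 2 n d \<noteq> Fol (l0, l1, l2) d"
    by (rule cfg_result[of 2 0 1]) (use H bound_two[of l2 d] in \<open>simp_all add: expo_def\<close>)
qed

end
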